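(* On $V_N$ (with the $H_n(N/n)$-action $\zeta_N$) one has $\mathbf h=H$, $\mathbf e=\frac NnE$, $\mathbf f=\frac nNF$, where $\mathbf h=\frac12\sum_i(\mathrm x_i\mathrm y_i+\mathrm y_i\mathrm x_i)$, $\mathbf e=\frac12\sum_i\mathrm y_i^2$, $\mathbf f=\frac12\sum_i\mathrm x_i^2$, and $H=\sum_pb_p\frac{\partial}{\partial b_p}+\frac{\dim\mathfrak g}2$, $F=\frac12\sum_pb_p^2$, $E=\frac12\Delta_{\mathfrak g}$ act on the $\mathbb C[\mathfrak g]$ factor.
   Context: $N$ divides $n$, $\mathfrak g=\mathfrak{sl}_N(\mathbb C)$, $V_N=(\mathbb C[\mathfrak g]\otimes(\mathbb C^N)^{\otimes n})^{\mathfrak g}$. $\{b_p\}$ is an orthonormal basis of $\mathfrak g$ for the trace form; $b_p$ also denotes the corresponding linear coordinate function (multiplication operator) on $\mathfrak g$, $\partial/\partial b_p$ the directional derivative, and $\Delta_{\mathfrak g}=\sum_p\partial^2/\partial b_p^2$ the Laplacian. $H_n(k)$ is the rational Cherednik algebra of type $A_{n-1}$ (quotient of $\mathbb C[S_n]\ltimes\mathbb C\langle\mathrm x_i,\mathrm y_i\rangle$ by $\sum\mathrm x_i=\sum\mathrm y_i=0$, $[\mathrm x_i,\mathrm x_j]=[\mathrm y_i,\mathrm y_j]=0$, $[\mathrm x_i,\mathrm y_j]=\frac1n-ks_{ij}$ for $i\ne j$), acting on $V_N$ via $\zeta_N$: $s_{ij}$ permutes tensor factors, $(\mathrm x_if)(A)=A_if(A)$,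 $(\mathrm y_if)(A)=\frac Nn\sum_p(b_p)_i\frac{\partial f}{\partial b_p}(A)$, where $B_i$ is $B$ acting on the $i$-th factor of $(\mathbb C^N)^{\otimes n}$. *)

theory Defs
  imports "HOL-Analysis.Analysis"
begin

text \<open>N x N complex matrices are functions nat => nat => complex (indices < N);
 tensors in (C^N)^{tensor n} are functions on index lists w (length n, entries < N);
 elements of C[g] tensor (C^N)^{tensor n} are functions from matrices to tensors.\<close>

type_synonym mat = "nat \<Rightarrow> nat \<Rightarrow> complex"
type_synonym tens = "nat list \<Rightarrow> complex"

definition mat_mult :: "nat \<Rightarrow> mat \<Rightarrow> mat \<Rightarrow> mat" where
  "mat_mult N A B = (\<lambda>i j. \<Sum>k<N. A i k * B k j)"

definition mtrace :: "nat \<Rightarrow> mat \<Rightarrow> complex" where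
  "mtrace N A = (\<Sum>i<N. A i i)"

definition in_sl :: "nat \<Rightarrow> mat \<Rightarrow> bool" where
  "in_sl N A \<longleftrightarrow> mtrace N A = 0 \<and> (\<forall>i j. (N \<le> i \<or> N \<le> j) \<longrightarrow> A i j = 0)"

definition lie_br :: "nat \<Rightarrow> mat \<Rightarrow> mat \<Rightarrow> mat" where
  "lie_br N X A = (\<lambda>i j. mat_mult N X A i j - mat_mult N A X i j)"

definition valid_idx :: "nat \<Rightarrow> nat \<Rightarrow> nat list \<Rightarrow> bool" where
  "valid_idx N n w \<longleftrightarrow> length w = n \<and> (\<forall>x\<in>set w. x < N)"

text \<open>B_i: the matrix B acting on the i-th tensor factor (factors indexed 0..n-1)\<close>
definition act_factor :: "nat \<Rightarrow> nat \<Rightarrow> mat \<Rightarrow> tens \<Rightarrow> tens" where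
  "act_factor N i B T = (\<lambda>w. \<Sum>k<N. B (w ! i) k * T (w[i := k]))"

definition dderiv :: "mat \<Rightarrow> (mat \<Rightarrow> tens) \<Rightarrow> mat \<Rightarrow> tens" where
  "dderiv v F = (\<lambda>A w. deriv (\<lambda>t. F (\<lambda>i j. A i j + t * v i j) w) 0)"

inductive poly_fun :: "nat \<Rightarrow> (mat \<Rightarrow> complex) \<Rightarrow> bool" for N where
  pf_const: "poly_fun N (\<lambda>A. c)"
| pf_coord: "i < N \<Longrightarrow> j < N \<Longrightarrow> poly_fun N (\<lambda>A. A i j)"
| pf_add: "poly_fun N f \<Longrightarrow> poly_fun N g \<Longrightarrow> poly_fun N (\<lambda>A. f A + g A)"
| pf_mult: "poly_fun N f \<Longrightarrow> poly_fun N g \<Longrightarrow> poly_fun N (\<lambda>A. f A * g A)"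

text \<open>V_N = (C[g] tensor (C^N)^{tensor n})^g, g = sl_N, invariance under the Lie algebra
 (differentiated form of F(g A g^-1) = g^{tensor n} F(A)).\<close>
definition V :: "nat \<Rightarrow> nat \<Rightarrow> (mat \<Rightarrow> tens) set" where
  "V N n = {F. (\<forall>w. poly_fun N (\<lambda>A. F A w))
      \<and> (\<forall>A w. \<not> valid_idx N n w \<longrightarrow> F A w = 0)
      \<and> (\<forall>X A w. in_sl N X \<longrightarrow> in_sl N A \<longrightarrow> valid_idx N n w \<longrightarrow>
            dderiv (lie_br N X A) F A w = (\<Sum>i<n. act_factor N i X (F A) w))}"

definition dim_sl :: "nat \<Rightarrow> nat" where
  "dim_sl N = N\<^sup>2 - 1"

definition onb :: "nat \<Rightarrow> (nat \<Rightarrow> mat) \<Rightarrow> bool" where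
  "onb N b \<longleftrightarrow> (\<forall>p<dim_sl N. in_sl N (b p)) \<and>
     (\<forall>p<dim_sl N. \<forall>q<dim_sl N. mtrace N (mat_mult N (b p) (b q)) = (if p = q then 1 else 0))"

text \<open>coordinate function b_p(A) = tr(b_p A)\<close>
definition coord :: "nat \<Rightarrow> mat \<Rightarrow> mat \<Rightarrow> complex" where
  "coord N B A = mtrace N (mat_mult N B A)"

definition xop :: "nat \<Rightarrow> nat \<Rightarrow> (mat \<Rightarrow> tens) \<Rightarrow> (mat \<Rightarrow> tens)" where
  "xop N i F = (\<lambda>A w. act_factor N i A (F A) w)"

definition yop :: "nat \<Rightarrow> nat \<Rightarrow> (nat \<Rightarrow> mat) \<Rightarrow> nat \<Rightarrow> (mat \<Rightarrow> tens) \<Rightarrow> (mat \<Rightarrow> tens)" where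
  "yop N n b i F = (\<lambda>A w. (of_nat N / of_nat n) *
      (\<Sum>p<dim_sl N. act_factor N i (b p) (dderiv (b p) F A) w))"

definition hbold where
  "hbold N n b F = (\<lambda>A w. (1/2) * (\<Sum>i<n. xop N i (yop N n b i F) A w + yop N n b i (xop N i F) A w))"

definition ebold where
  "ebold N n b F = (\<lambda>A w. (1/2) * (\<Sum>i<n. yop N n b i (yop N n b i F) A w))"

definition fbold where
  "fbold N n F = (\<lambda>A w. (1/2) * (\<Sum>i<n. xop N i (xop N i F) A w))"

definition Hop where
  "Hop N b F = (\<lambda>A w. (\<Sum>p<dim_sl N. coord N (b p) A * dderiv (b p) F A w)
      + (of_nat (dim_sl N) / 2) * F A w)"

definition Eop where
  "Eop N b F = (\<lambda>A w. (1/2) * (\<Sum>p<dim_sl N. dderiv (b p) (dderiv (b p) F) A w))"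

definition Fop where
  "Fop N b F = (\<lambda>A w. (1/2) * (\<Sum>p<dim_sl N. (coord N (b p) A)\<^sup>2) * F A w)"

end

theory Submission
  imports "Jordan_Normal_Form.Determinant" Defs
begin

lemma sum_divmod:
  fixes g :: "nat \<Rightarrow> nat \<Rightarrow> 'a::comm_monoid_add"
  assumes "0 < N"
  shows "(\<Sum>x<N*N. g (x div N) (x mod N)) = (\<Sum>i<N. \<Sum>j<N. g i j)"
proof -
  have bij: "bij_betw (\<lambda>(i,j). i*N+j) ({..<N}\<times>{..<N}) {..<N*N}"
  proof (rule bij_betwI[where g="\<lambda>x. (x div N, x mod N)"])
    show "(\<lambda>(i, j). i * N + j) \<in> {..<N} \<times> {..<N} \<rightarrow> {..<N * N}"
    proof
      fix x assume "x \<in> {..<N} \<times> {..<N}"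
      then obtain i j where x: "x = (i,j)" "i < N" "j < N" by auto
      have "i*N + j < i*N + N" using x by simp
      also have "\<dots> = (i+1)*N" by simp
      also have "\<dots> \<le> N*N" using x by (intro mult_right_mono) auto
      finally show "(\<lambda>(i, j). i * N + j) x \<in> {..<N*N}" using x by simp
    qed
    show "(\<lambda>x. (x div N, x mod N)) \<in> {..<N * N} \<rightarrow> {..<N} \<times> {..<N}"
      using assms by (auto simp: less_mult_imp_div_less)
  qed (auto simp: assms)
  have "(\<Sum>x<N*N. g (x div N) (x mod N)) = (\<Sum>x\<in>{..<N}\<times>{..<N}. g (fst x) (snd x))"
    by (subst sum.reindex_bij_betw[OF bij, symmetric]) (auto intro!: sum.cong simp: assms)
  also have "\<dots> = (\<Sum>i<N. \<Sum>j<N. g i j)"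
    by (simp add: sum.cartesian_product split_def)
  finally show ?thesis .
qed

lemma delta_l: "finite S \<Longrightarrow> (\<Sum>j\<in>S. (if i = j then 1 else 0) * f j) = (if i \<in> S then f i else (0::'a::semiring_1))"
proof -
  assume "finite S"
  have "(\<Sum>j\<in>S. (if i = j then 1 else 0) * f j) = (\<Sum>j\<in>S. if i = j then f j else 0)"
    by (intro sum.cong) auto
  thus ?thesis using \<open>finite S\<close> by (simp add: sum.delta)
qed

lemma delta_r: "finite S \<Longrightarrow> (\<Sum>j\<in>S. f j * (if i = j then 1 else 0)) = (if i \<in> S then f i else (0::'a::semiring_1))"
proof -
  assume "finite S"
  have "(\<Sum>j\<in>S. f j * (if i = j then 1 else 0)) = (\<Sum>j\<in>S. if i = j then f j else 0)"
    by (intro sum.cong) auto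
  thus ?thesis using \<open>finite S\<close> by (simp add: sum.delta)
qed

lemma completeness:
  assumes onb: "onb N b" and N: "0 < N" and abcd: "a<N" "bb<N" "c<N" "d<N"
  shows "(\<Sum>p<dim_sl N. b p a bb * b p c d) =
     (if a = d \<and> bb = c then 1 else 0) - (if a = bb \<and> c = d then 1/of_nat N else 0)"
proof -
  define M where "M = N*N"
  have dimM: "dim_sl N = M - 1" by (simp add: M_def dim_sl_def power2_eq_square)
  have M1: "M = Suc (M - 1)" using N by (simp add: M_def)
  have tr0: "\<And>p. p < M - 1 \<Longrightarrow> mtrace N (b p) = 0"
    using onb dimM by (auto simp: onb_def in_sl_def)
  have orth: "\<And>p q. p < M - 1 \<Longrightarrow> q < M - 1 \<Longrightarrow>
     (\<Sum>i<N. \<Sum>k<N. b p i k * b q k i) = (if p = q then 1 else 0)"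
    using onb dimM by (auto simp: onb_def mtrace_def mat_mult_def)
  define U :: "complex Matrix.mat" where "U = Matrix.mat M M (\<lambda>(x,p). if p < M - 1 then b p (x div N) (x mod N)
      else (if x div N = x mod N then 1 else 0))"
  define V :: "complex Matrix.mat" where "V = Matrix.mat M M (\<lambda>(x,p). if p < M - 1 then b p (x mod N) (x div N)
      else (if x div N = x mod N then 1 / of_nat N else 0))"
  have Uc: "U \<in> carrier_mat M M" and Vc: "V \<in> carrier_mat M M" by (auto simp: U_def V_def)
  have "transpose_mat U * V = 1\<^sub>m M"
  proof (rule eq_matI)
    fix p q assume pq: "p < dim_row (1\<^sub>m M)" "q < dim_col (1\<^sub>m M)"
    hence pq: "p < M" "q < M" by auto
    have "(transpose_mat U * V) $$ (p,q) = (\<Sum>x<M. U $$ (x,p) * V $$ (x,q))"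
      using pq Uc Vc by (simp add: scalar_prod_def col_def row_def atLeast0LessThan
        Groups.mult_ac)
    also have "\<dots> = (\<Sum>x<N*N. (\<lambda>i j. (if p < M - 1 then b p i j else (if i = j then 1 else 0)) *
         (if q < M - 1 then b q j i else (if i = j then 1 / of_nat N else 0))) (x div N) (x mod N))"
      unfolding M_def using pq by (intro sum.cong) (auto simp: U_def V_def M_def)
    also have "\<dots> = (\<Sum>i<N. \<Sum>j<N. (if p < M - 1 then b p i j else (if i = j then 1 else 0)) *
         (if q < M - 1 then b q j i else (if i = j then 1 / of_nat N else 0)))"
      by (rule sum_divmod[OF N])
    also have "\<dots> = 1\<^sub>m M $$ (p,q)"
    proof (cases "p < M - 1"; cases "q < M - 1")
      assume "p < M - 1" "q < M - 1" thus ?thesis using orth pq by simp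
    next
      assume a: "p < M - 1" "\<not> q < M - 1"
      hence "q = M - 1" "p \<noteq> q" using pq by auto
      have "(\<Sum>i<N. \<Sum>j<N. b p i j * (if i = j then 1 / of_nat N else 0)) = (\<Sum>i<N. b p i i / of_nat N)"
        by (simp add: if_distrib cong: if_cong)
      also have "\<dots> = mtrace N (b p) / of_nat N" by (simp add: mtrace_def sum_divide_distrib)
      finally show ?thesis using a tr0 pq by simp
    next
      assume a: "\<not> p < M - 1" "q < M - 1"
      hence "p \<noteq> q" using pq by auto
      have "(\<Sum>i<N. \<Sum>j<N. (if i = j then 1 else 0) * b q j i) = (\<Sum>i<N. b q i i)"
        by (intro sum.cong refl) (simp add: delta_l)
      thus ?thesis using a tr0 pq by (simp add: mtrace_def)
    next
      assume a: "\<not> p < M - 1" "\<not> q < M - 1"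
      hence "p = q" using pq by auto
      have "(\<Sum>i<N. \<Sum>j<N. (if i = j then 1 else 0) * (if i = j then 1 / of_nat N else (0::complex))) = (\<Sum>i<N. 1 / of_nat N)"
        by (simp add: if_distrib cong: if_cong)
      thus ?thesis using a pq N by simp
    qed
    finally show "(transpose_mat U * V) $$ (p,q) = 1\<^sub>m M $$ (p,q)" .
  qed (use Uc Vc in auto)
  hence VU: "V * transpose_mat U = 1\<^sub>m M"
    using mat_mult_left_right_inverse[of "transpose_mat U" M V] Uc Vc by auto
  define x where "x = bb*N + a"
  define y where "y = c*N + d"
  have xlt: "x < M" unfolding x_def M_def
  proof -
    have "bb*N + a < bb*N + N" using abcd by simp
    also have "\<dots> = (bb+1)*N" by simp
    also have "\<dots> \<le> N*N" using abcd by (intro mult_right_mono) auto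
    finally show "bb*N + a < N*N" .
  qed
  have ylt: "y < M" unfolding y_def M_def
  proof -
    have "c*N + d < c*N + N" using abcd by simp
    also have "\<dots> = (c+1)*N" by simp
    also have "\<dots> \<le> N*N" using abcd by (intro mult_right_mono) auto
    finally show "c*N + d < N*N" .
  qed
  have xdm: "x div N = bb" "x mod N = a" "y div N = c" "y mod N = d"
    using abcd by (auto simp: x_def y_def)
  have "(V * transpose_mat U) $$ (x,y) = (\<Sum>p<M. V $$ (x,p) * U $$ (y,p))"
    using xlt ylt Uc Vc by (simp add: scalar_prod_def col_def row_def atLeast0LessThan)
  also have "\<dots> = (\<Sum>p<M - 1. b p a bb * b p c d) + (if a = bb then 1 / of_nat N else 0) * (if c = d then 1 else 0)"
    apply (subst M1) apply (subst sum.lessThan_Suc)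
    using xlt ylt xdm by (auto simp: U_def V_def intro!: sum.cong)
  finally have "(\<Sum>p<M - 1. b p a bb * b p c d) + (if a = bb then 1 / of_nat N else 0) * (if c = d then 1 else 0)
     = (if x = y then 1 else 0)" using VU xlt ylt by simp
  moreover have "(x = y) = (a = d \<and> bb = c)"
  proof
    assume "x = y" thus "a = d \<and> bb = c" using xdm by metis
  qed (simp add: x_def y_def)
  moreover have "(if a = bb then 1 / of_nat N else 0) * (if c = d then 1 else 0) =
     (if a = bb \<and> c = d then 1 / of_nat N else (0::complex))" by simp
  ultimately have "(\<Sum>p<M - 1. b p a bb * b p c d) + (if a = bb \<and> c = d then 1 / of_nat N else 0)
     = (if a = d \<and> bb = c then 1 else 0)" by simp
  thus ?thesis using dimM by (simp add: eq_diff_eq)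
qed

definition addm :: "mat \<Rightarrow> complex \<Rightarrow> mat \<Rightarrow> mat" where
  "addm A t v = (\<lambda>i j. A i j + t * v i j)"

definition dd :: "mat \<Rightarrow> (mat \<Rightarrow> complex) \<Rightarrow> mat \<Rightarrow> complex" where
  "dd v f A = deriv (\<lambda>t. f (addm A t v)) 0"

lemma dderiv_dd: "dderiv v F A w = dd v (\<lambda>A. F A w) A"
  by (simp add: dderiv_def dd_def addm_def)

lemma addm0[simp]: "addm A 0 v = A"
  by (simp add: addm_def)

lemma dd_eqI: "((\<lambda>t. f (addm A t v)) has_field_derivative D) (at 0) \<Longrightarrow> dd v f A = D"
  unfolding dd_def by (rule DERIV_imp_deriv)

lemma poly_props:
  assumes "poly_fun N f"
  shows "(\<forall>A v. ((\<lambda>t. f (addm A t v)) has_field_derivative dd v f A) (at 0))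
     \<and> (\<forall>v. poly_fun N (dd v f))
     \<and> (\<forall>u c v A. dd (addm u c v) f A = dd u f A + c * dd v f A)"
  using assms
proof (induction rule: poly_fun.induct)
  case (pf_const c)
  have d: "\<And>A v. ((\<lambda>t. (\<lambda>A. c) (addm A t v)) has_field_derivative 0) (at 0)" by simp
  have e: "\<And>A v. dd v (\<lambda>A. c) A = 0" by (rule dd_eqI[OF d])
  show ?case using d e by (simp add: poly_fun.pf_const)
next
  case (pf_coord i j)
  have d: "\<And>A v. ((\<lambda>t. (\<lambda>A. A i j) (addm A t v)) has_field_derivative v i j) (at 0)"
    by (simp add: addm_def) (auto intro!: derivative_eq_intros)
  have e: "\<And>A v. dd v (\<lambda>A. A i j) A = v i j" by (rule dd_eqI[OF d])
  show ?case using d e by (simp add: poly_fun.pf_const addm_def)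
next
  case (pf_add f g)
  have d: "\<And>A v. ((\<lambda>t. (\<lambda>A. f A + g A) (addm A t v)) has_field_derivative dd v f A + dd v g A) (at 0)"
    using pf_add.IH by (auto intro!: DERIV_add)
  have e: "\<And>A v. dd v (\<lambda>A. f A + g A) A = dd v f A + dd v g A" by (rule dd_eqI[OF d])
  have p: "\<And>v. poly_fun N (dd v (\<lambda>A. f A + g A))"
  proof -
    fix v
    have "dd v (\<lambda>A. f A + g A) = (\<lambda>A. dd v f A + dd v g A)" using e by auto
    thus "poly_fun N (dd v (\<lambda>A. f A + g A))" using pf_add.IH by (simp add: poly_fun.pf_add)
  qed
  show ?case using d e p pf_add.IH by (simp add: algebra_simps poly_fun.pf_add)
next
  case (pf_mult f g)
  have d: "\<And>A v. ((\<lambda>t. (\<lambda>A. f A * g A) (addm A t v)) has_field_derivative f A * dd v g A + dd v f A * g A) (at 0)"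
  proof -
    fix A v
    have "((\<lambda>t. f (addm A t v) * g (addm A t v)) has_field_derivative
        f (addm A 0 v) * dd v g A + dd v f A * g (addm A 0 v)) (at 0)"
      using pf_mult.IH by (intro DERIV_mult') auto
    thus "((\<lambda>t. (\<lambda>A. f A * g A) (addm A t v)) has_field_derivative f A * dd v g A + dd v f A * g A) (at 0)"
      by simp
  qed
  have e: "\<And>A v. dd v (\<lambda>A. f A * g A) A = f A * dd v g A + dd v f A * g A" by (rule dd_eqI[OF d])
  have p: "\<And>v. poly_fun N (dd v (\<lambda>A. f A * g A))"
  proof -
    fix v
    have "dd v (\<lambda>A. f A * g A) = (\<lambda>A. f A * dd v g A + dd v f A * g A)" using e by auto
    thus "poly_fun N (dd v (\<lambda>A. f A * g A))" using pf_mult.IH pf_mult.hyps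
      by (simp add: poly_fun.pf_add poly_fun.pf_mult)
  qed
  show ?case using d e p pf_mult.IH pf_mult.hyps by (simp add: algebra_simps poly_fun.pf_add poly_fun.pf_mult)
qed

context fixes N :: nat begin

lemma dd_has: "poly_fun N f \<Longrightarrow> ((\<lambda>t. f (addm A t v)) has_field_derivative dd v f A) (at 0)"
  using poly_props by blast
lemma dd_poly: "poly_fun N f \<Longrightarrow> poly_fun N (dd v f)"
  using poly_props by blast
lemma dd_lin: "poly_fun N f \<Longrightarrow> dd (addm u c v) f A = dd u f A + c * dd v f A"
  using poly_props by blast

lemma dd_add: "poly_fun N f \<Longrightarrow> poly_fun N g \<Longrightarrow> dd v (\<lambda>A. f A + g A) A = dd v f A + dd v g A"
  by (rule dd_eqI) (auto intro!: DERIV_add dd_has)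
lemma dd_mult: "poly_fun N f \<Longrightarrow> poly_fun N g \<Longrightarrow> dd v (\<lambda>A. f A * g A) A = dd v f A * g A + f A * dd v g A"
proof -
  assume f: "poly_fun N f" and g: "poly_fun N g"
  have "((\<lambda>t. f (addm A t v) * g (addm A t v)) has_field_derivative
        f (addm A 0 v) * dd v g A + dd v f A * g (addm A 0 v)) (at 0)"
    using f g by (intro DERIV_mult' dd_has)
  hence "dd v (\<lambda>A. f A * g A) A = f A * dd v g A + dd v f A * g A" by (intro dd_eqI) simp
  thus ?thesis by simp
qed
lemma dd_const: "dd v (\<lambda>A. c) A = 0"
  by (rule dd_eqI) simp
lemma dd_cmult: "poly_fun N f \<Longrightarrow> dd v (\<lambda>A. c * f A) A = c * dd v f A"
  using dd_mult[of "\<lambda>A. c" f] by (simp add: dd_const poly_fun.pf_const)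
lemma dd_coord: "dd v (\<lambda>A. A i j) A = v i j"
  by (rule dd_eqI) (simp add: addm_def, auto intro!: derivative_eq_intros)

lemma poly_sum: "finite S \<Longrightarrow> (\<And>k. k \<in> S \<Longrightarrow> poly_fun N (g k)) \<Longrightarrow> poly_fun N (\<lambda>A. \<Sum>k\<in>S. g k A)"
proof (induction S rule: finite_induct)
  case empty thus ?case using poly_fun.pf_const[of N 0] by simp
next
  case (insert x F) thus ?case by (simp add: poly_fun.pf_add)
qed

lemma poly_cmult: "poly_fun N f \<Longrightarrow> poly_fun N (\<lambda>A. c * f A)"
  by (intro poly_fun.pf_mult poly_fun.pf_const)

lemma dd_sum: "finite S \<Longrightarrow> (\<And>k. k \<in> S \<Longrightarrow> poly_fun N (g k)) \<Longrightarrow> dd v (\<lambda>A. \<Sum>k\<in>S. g k A) A = (\<Sum>k\<in>S. dd v (g k) A)"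
proof (induction S rule: finite_induct)
  case empty thus ?case by (simp add: dd_const)
next
  case (insert x F)
  have "dd v (\<lambda>A. \<Sum>k\<in>insert x F. g k A) A = dd v (\<lambda>A. g x A + (\<Sum>k\<in>F. g k A)) A"
    using insert by simp
  also have "\<dots> = dd v (g x) A + dd v (\<lambda>A. \<Sum>k\<in>F. g k A) A"
    using insert by (intro dd_add poly_sum) auto
  finally show ?case using insert by simp
qed

lemma dd_zero_dir: "poly_fun N f \<Longrightarrow> dd (\<lambda>i j. 0) f A = 0"
proof -
  assume f: "poly_fun N f"
  have "addm (\<lambda>i j. 0) 1 (\<lambda>i j. 0) = (\<lambda>i j. 0)" by (simp add: addm_def)
  hence "dd (\<lambda>i j. 0) f A = dd (\<lambda>i j. 0) f A + dd (\<lambda>i j. 0) f A"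
    using dd_lin[OF f, of "\<lambda>i j. 0" 1 "\<lambda>i j. 0" A] by simp
  thus ?thesis by simp
qed

lemma dd_dir_sum: "finite S \<Longrightarrow> poly_fun N f \<Longrightarrow>
   dd (\<lambda>i j. \<Sum>q\<in>S. c q * u q i j) f A = (\<Sum>q\<in>S. c q * dd (u q) f A)"
proof (induction S rule: finite_induct)
  case empty thus ?case by (simp add: dd_zero_dir)
next
  case (insert x F)
  have "(\<lambda>i j. \<Sum>q\<in>insert x F. c q * u q i j) = addm (\<lambda>i j. \<Sum>q\<in>F. c q * u q i j) (c x) (u x)"
    using insert by (auto simp: addm_def add.commute)
  thus ?case using insert dd_lin[of f] by simp
qed

lemma dd_comm: "poly_fun N f \<Longrightarrow> dd u (dd v f) A = dd v (dd u f) A"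
proof (induction arbitrary: A u v rule: poly_fun.induct)
  case (pf_const c)
  have "dd v (\<lambda>A. c) = (\<lambda>A. 0)" "dd u (\<lambda>A. c) = (\<lambda>A. 0)" by (auto simp: dd_const)
  thus ?case by (simp add: dd_const)
next
  case (pf_coord i j)
  have "dd v (\<lambda>A. A i j) = (\<lambda>A. v i j)" "dd u (\<lambda>A. A i j) = (\<lambda>A. u i j)" by (auto simp: dd_coord)
  thus ?case by (simp add: dd_const)
next
  case (pf_add f g)
  have "\<And>v. dd v (\<lambda>A. f A + g A) = (\<lambda>A. dd v f A + dd v g A)" using pf_add by (auto simp: dd_add)
  thus ?case using pf_add by (simp add: dd_add dd_poly)
next
  case (pf_mult f g)
  have e: "\<And>v. dd v (\<lambda>A. f A * g A) = (\<lambda>A. dd v f A * g A + f A * dd v g A)" using pf_mult by (auto simp: dd_mult)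
  have "dd u (dd v (\<lambda>A. f A * g A)) A = dd u (dd v f) A * g A + dd v f A * dd u g A + (dd u f A * dd v g A + f A * dd u (dd v g) A)"
    unfolding e using pf_mult by (simp add: dd_add dd_mult dd_poly poly_fun.pf_mult)
  moreover have "dd v (dd u (\<lambda>A. f A * g A)) A = dd v (dd u f) A * g A + dd u f A * dd v g A + (dd v f A * dd u g A + f A * dd v (dd u g) A)"
    unfolding e using pf_mult by (simp add: dd_add dd_mult dd_poly poly_fun.pf_mult)
  ultimately show ?case using pf_mult by (simp add: algebra_simps)
qed

lemma addm_sl: "in_sl N A \<Longrightarrow> in_sl N v \<Longrightarrow> in_sl N (addm A t v)"
  by (simp add: in_sl_def addm_def mtrace_def sum.distrib sum_distrib_left[symmetric])

lemma dd_cong_sl: "(\<And>A. in_sl N A \<Longrightarrow> f A = g A) \<Longrightarrow> in_sl N A \<Longrightarrow> in_sl N v \<Longrightarrow> dd v f A = dd v g A"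
  unfolding dd_def using addm_sl by simp

end

definition blk :: "nat \<Rightarrow> mat \<Rightarrow> bool" where
  "blk N A \<longleftrightarrow> (\<forall>i j. (N \<le> i \<or> N \<le> j) \<longrightarrow> A i j = 0)"

definition idm :: "nat \<Rightarrow> mat" where
  "idm N = (\<lambda>i j. if i = j \<and> i < N then 1 else 0)"

lemma sl_blk: "in_sl N A \<Longrightarrow> blk N A" by (auto simp: in_sl_def blk_def)

lemma blkD: "blk N A \<Longrightarrow> N \<le> i \<or> N \<le> j \<Longrightarrow> A i j = 0" unfolding blk_def by blast

lemma mm_assoc: "mat_mult N (mat_mult N A B) C = mat_mult N A (mat_mult N B C)"
proof (intro ext)
  fix i j
  have "mat_mult N (mat_mult N A B) C i j = (\<Sum>k<N. \<Sum>l<N. A i l * B l k * C k j)"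
    by (simp add: mat_mult_def sum_distrib_right)
  also have "\<dots> = (\<Sum>l<N. \<Sum>k<N. A i l * B l k * C k j)" by (rule sum.swap)
  also have "\<dots> = mat_mult N A (mat_mult N B C) i j"
    by (simp add: mat_mult_def sum_distrib_left mult.assoc)
  finally show "mat_mult N (mat_mult N A B) C i j = mat_mult N A (mat_mult N B C) i j" .
qed

lemma tr_comm: "mtrace N (mat_mult N A B) = mtrace N (mat_mult N B A)"
  unfolding mtrace_def mat_mult_def by (subst sum.swap) (simp add: mult.commute)

lemma mm_blk: "blk N A \<Longrightarrow> blk N B \<Longrightarrow> blk N (mat_mult N A B)"
  by (auto simp: blk_def mat_mult_def)

lemma idm_blk: "blk N (idm N)" by (simp add: blk_def idm_def)

lemma mm_idm_l: "blk N B \<Longrightarrow> mat_mult N (idm N) B = B"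
proof (intro ext)
  fix i j assume B: "blk N B"
  show "mat_mult N (idm N) B i j = B i j"
  proof (cases "i < N")
    case True
    have "mat_mult N (idm N) B i j = (\<Sum>k<N. (if i = k then 1 else 0) * B k j)"
      using True by (auto simp: mat_mult_def idm_def intro!: sum.cong)
    thus ?thesis using True by (simp add: delta_l)
  next
    case False thus ?thesis using B by (auto simp: mat_mult_def idm_def blk_def)
  qed
qed

lemma mm_idm_r: "blk N B \<Longrightarrow> mat_mult N B (idm N) = B"
proof (intro ext)
  fix i j assume B: "blk N B"
  show "mat_mult N B (idm N) i j = B i j"
  proof (cases "j < N")
    case True
    have "mat_mult N B (idm N) i j = (\<Sum>k<N. B i k * (if j = k then 1 else 0))"
      using True by (auto simp: mat_mult_def idm_def intro!: sum.cong)
    thus ?thesis using True by (simp add: delta_r)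
  next
    case False thus ?thesis using B by (auto simp: mat_mult_def idm_def blk_def)
  qed
qed

lemma mtrace_idm: "mtrace N (idm N) = of_nat N" by (simp add: mtrace_def idm_def)

lemma mm_lin_l: "mat_mult N (\<lambda>i j. c * P i j + d * Q i j) R = (\<lambda>i j. c * mat_mult N P R i j + d * mat_mult N Q R i j)"
  by (simp add: mat_mult_def sum.distrib sum_distrib_left algebra_simps)
lemma mm_lin_r: "mat_mult N R (\<lambda>i j. c * P i j + d * Q i j) = (\<lambda>i j. c * mat_mult N R P i j + d * mat_mult N R Q i j)"
  by (simp add: mat_mult_def sum.distrib sum_distrib_left algebra_simps)
lemma mm_sum_l: "mat_mult N (\<lambda>i j. \<Sum>q\<in>S. P q i j) R = (\<lambda>i j. \<Sum>q\<in>S. mat_mult N (P q) R i j)"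
  unfolding mat_mult_def by (simp add: sum_distrib_right, subst sum.swap, simp)
lemma mm_sum_r: "mat_mult N R (\<lambda>i j. \<Sum>q\<in>S. P q i j) = (\<lambda>i j. \<Sum>q\<in>S. mat_mult N R (P q) i j)"
  unfolding mat_mult_def by (simp add: sum_distrib_left, subst sum.swap, simp)
lemma tr_lin: "mtrace N (\<lambda>i j. c * P i j + d * Q i j) = c * mtrace N P + d * mtrace N Q"
  by (simp add: mtrace_def sum.distrib sum_distrib_left)
lemma tr_sum: "mtrace N (\<lambda>i j. \<Sum>q\<in>S. P q i j) = (\<Sum>q\<in>S. mtrace N (P q))"
  unfolding mtrace_def by (rule sum.swap)
lemma coord_lin: "coord N B (\<lambda>i j. c * P i j + d * Q i j) = c * coord N B P + d * coord N B Q"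
  by (simp add: coord_def mm_lin_r tr_lin)
lemma coord_sum: "coord N B (\<lambda>i j. \<Sum>q\<in>S. P q i j) = (\<Sum>q\<in>S. coord N B (P q))"
  by (simp add: coord_def mm_sum_r tr_sum)

lemma coord_comm: "coord N B A = coord N A B" by (simp add: coord_def tr_comm)

lemma lie_sl: "blk N X \<Longrightarrow> blk N A \<Longrightarrow> in_sl N (lie_br N X A)"
proof -
  assume X: "blk N X" and A: "blk N A"
  have "mtrace N (lie_br N X A) = mtrace N (mat_mult N X A) - mtrace N (mat_mult N A X)"
    unfolding lie_br_def using tr_lin[of N 1 "mat_mult N X A" "-1" "mat_mult N A X"] by simp
  hence "mtrace N (lie_br N X A) = 0" by (simp add: tr_comm)
  moreover have "blk N (lie_br N X A)" using mm_blk[OF X A] mm_blk[OF A X] by (auto simp: blk_def lie_br_def)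
  ultimately show ?thesis by (simp add: in_sl_def blk_def)
qed

lemma swap3: "(\<Sum>p\<in>P. \<Sum>k\<in>K. \<Sum>l\<in>L. g p k l) = (\<Sum>k\<in>K. \<Sum>l\<in>L. \<Sum>p\<in>P. (g p k l :: 'a::comm_monoid_add))"
proof -
  have "(\<Sum>p\<in>P. \<Sum>k\<in>K. \<Sum>l\<in>L. g p k l) = (\<Sum>k\<in>K. \<Sum>p\<in>P. \<Sum>l\<in>L. g p k l)" by (rule sum.swap)
  also have "\<dots> = (\<Sum>k\<in>K. \<Sum>l\<in>L. \<Sum>p\<in>P. g p k l)" by (intro sum.cong refl sum.swap)
  finally show ?thesis .
qed

lemma sdelta: "(\<Sum>k<(N::nat). if k = y then g k else 0) = (if y < N then g y else (0::'a::comm_monoid_add))"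
  by (subst sum.delta) auto
lemma sdelta': "(\<Sum>k<(N::nat). if y = k then g k else 0) = (if y < N then g y else (0::'a::comm_monoid_add))"
  by (subst sum.delta') auto

lemma md: "(x::complex) * ((if P then 1 else 0) - (if Q then c else 0)) = (if P then x else 0) - (if Q then x * c else 0)"
  by (simp add: right_diff_distrib)

lemma dsum2: "(\<Sum>a<(N::nat). \<Sum>k<N. if a = x \<and> k = y then g a k else 0) = (if x < N \<and> y < N then g x y else (0::complex))"
proof -
  have "(\<Sum>a<N. \<Sum>k<N. if a = x \<and> k = y then g a k else 0) = (\<Sum>a<N. if a = x then (if y < N then g a y else 0) else 0)"
  proof (intro sum.cong refl)
    fix a show "(\<Sum>k<N. if a = x \<and> k = y then g a k else 0) = (if a = x then (if y < N then g a y else 0) else 0)"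
      by (cases "a = x") (simp_all add: sdelta)
  qed
  also have "\<dots> = (if x < N \<and> y < N then g x y else 0)" by (cases "y < N") (simp_all add: sdelta)
  finally show ?thesis .
qed

lemma dtr: "(\<Sum>k<(N::nat). \<Sum>l<N. if P \<and> k = l then Y k l else 0) = (if P then (\<Sum>k<N. Y k k) else (0::complex))"
proof (cases P)
  case True
  have "(\<Sum>k<N. \<Sum>l<N. if P \<and> k = l then Y k l else 0) = (\<Sum>k<N. \<Sum>l<N. if k = l then Y k l else 0)"
    using True by simp
  also have "\<dots> = (\<Sum>k<N. Y k k)" by (intro sum.cong refl) (simp add: sdelta')
  finally show ?thesis using True by simp
qed simp

locale bas = fixes N :: nat and b :: "nat \<Rightarrow> Defs.mat"
  assumes onb: "onb N b" and Npos: "0 < N"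
begin

abbreviation "dm \<equiv> dim_sl N"

lemma b_sl: "p < dm \<Longrightarrow> in_sl N (b p)" using onb by (simp add: onb_def)
lemma b_blk: "p < dm \<Longrightarrow> blk N (b p)" using b_sl sl_blk by blast
lemma b_orth: "p < dm \<Longrightarrow> q < dm \<Longrightarrow> coord N (b p) (b q) = (if p = q then 1 else 0)"
  using onb by (simp add: onb_def coord_def)
lemma C: "a<N \<Longrightarrow> bb<N \<Longrightarrow> c<N \<Longrightarrow> d<N \<Longrightarrow> (\<Sum>p<dm. b p a bb * b p c d) =
     (if a = d \<and> bb = c then 1 else 0) - (if a = bb \<and> c = d then 1/of_nat N else 0)"
  by (rule completeness[OF onb Npos])

lemma b_out: "p < dm \<Longrightarrow> N \<le> i \<or> N \<le> j \<Longrightarrow> b p i j = 0"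
  using b_blk blkD by blast

lemma CAS2: "(\<lambda>i j. \<Sum>p<dm. mat_mult N (b p) (b p) i j) = (\<lambda>i j. (of_nat N - 1/of_nat N) * idm N i j)"
proof (intro ext)
  fix i j
  show "(\<Sum>p<dm. mat_mult N (b p) (b p) i j) = (of_nat N - 1/of_nat N) * idm N i j"
  proof (cases "i < N \<and> j < N")
    case True
    have "(\<Sum>p<dm. mat_mult N (b p) (b p) i j) = (\<Sum>k<N. \<Sum>p<dm. b p i k * b p k j)"
      unfolding mat_mult_def by (rule sum.swap)
    also have "\<dots> = (\<Sum>k<N. (if i = j then 1 else 0) - (if i = k \<and> k = j then 1/of_nat N else 0))"
      using True by (intro sum.cong refl) (simp add: C)
    also have "\<dots> = of_nat N * (if i = j then 1 else 0) - (if i = j then 1/of_nat N else 0)"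
      using True by (simp add: sum_subtractf sum.delta cong: conj_cong)
    finally show ?thesis using True by (cases "i = j") (simp_all add: idm_def)
  next
    case False
    hence "\<And>p. p < dm \<Longrightarrow> mat_mult N (b p) (b p) i j = 0"
      using mm_blk[OF b_blk b_blk] blkD by (metis not_le)
    thus ?thesis using False by (auto simp: idm_def)
  qed
qed

lemma CAS1: "blk N Y \<Longrightarrow> (\<lambda>i j. \<Sum>p<dm. mat_mult N (b p) (mat_mult N Y (b p)) i j) =
    (\<lambda>i j. mtrace N Y * idm N i j - Y i j / of_nat N)"
proof (intro ext)
  fix i j assume Y: "blk N Y"
  show "(\<Sum>p<dm. mat_mult N (b p) (mat_mult N Y (b p)) i j) = mtrace N Y * idm N i j - Y i j / of_nat N"
  proof (cases "i < N \<and> j < N")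
    case True
    have "(\<Sum>p<dm. mat_mult N (b p) (mat_mult N Y (b p)) i j) = (\<Sum>p<dm. \<Sum>k<N. \<Sum>l<N. Y k l * (b p i k * b p l j))"
      unfolding mat_mult_def by (simp add: sum_distrib_left mult_ac)
    also have "\<dots> = (\<Sum>k<N. \<Sum>l<N. \<Sum>p<dm. Y k l * (b p i k * b p l j))" by (rule swap3)
    also have "\<dots> = (\<Sum>k<N. \<Sum>l<N. Y k l * ((if i = j \<and> k = l then 1 else 0) - (if i = k \<and> l = j then 1/of_nat N else 0)))"
      using True by (intro sum.cong refl) (simp add: C sum_distrib_left[symmetric])
    also have "\<dots> = (\<Sum>k<N. \<Sum>l<N. (if i = j \<and> k = l then Y k l else 0) - (if i = k \<and> l = j then Y k l * (1/of_nat N) else 0))"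
      by (simp only: md)
    also have "\<dots> = (\<Sum>k<N. \<Sum>l<N. (if i = j \<and> k = l then Y k l else 0)) - (\<Sum>k<N. \<Sum>l<N. (if k = i \<and> l = j then Y k l * (1/of_nat N) else 0))"
      by (simp only: sum_subtractf eq_commute[of i])
    also have "\<dots> = (if i = j then mtrace N Y else 0) - Y i j / of_nat N"
      using True by (simp only: dsum2 dtr mtrace_def) simp
    finally show ?thesis using True by (simp add: idm_def)
  next
    case False
    hence "\<And>p. p < dm \<Longrightarrow> mat_mult N (b p) (mat_mult N Y (b p)) i j = 0"
      using mm_blk[OF b_blk mm_blk[OF Y b_blk]] blkD by (metis not_le)
    moreover have "Y i j = 0" using False Y blkD by (metis not_le)
    ultimately show ?thesis using False by (auto simp: idm_def)
  qed
qed

lemma EXP: "in_sl N u \<Longrightarrow> (\<lambda>i j. \<Sum>q<dm. coord N (b q) u * b q i j) = u"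
proof (intro ext)
  fix i j assume u: "in_sl N u"
  show "(\<Sum>q<dm. coord N (b q) u * b q i j) = u i j"
  proof (cases "i < N \<and> j < N")
    case True
    have "(\<Sum>q<dm. coord N (b q) u * b q i j) = (\<Sum>q<dm. \<Sum>a<N. \<Sum>k<N. u k a * (b q a k * b q i j))"
      unfolding coord_def mtrace_def mat_mult_def by (simp add: sum_distrib_left sum_distrib_right mult_ac)
    also have "\<dots> = (\<Sum>a<N. \<Sum>k<N. \<Sum>q<dm. u k a * (b q a k * b q i j))" by (rule swap3)
    also have "\<dots> = (\<Sum>a<N. \<Sum>k<N. u k a * ((if a = j \<and> k = i then 1 else 0) - (if a = k \<and> i = j then 1/of_nat N else 0)))"
      using True by (intro sum.cong refl) (simp add: C sum_distrib_left[symmetric])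
    also have "\<dots> = (\<Sum>a<N. \<Sum>k<N. (if a = j \<and> k = i then u k a else 0) - (if a = k \<and> i = j then u k a * (1/of_nat N) else 0))"
      by (simp only: md)
    also have "\<dots> = (\<Sum>a<N. \<Sum>k<N. (if a = j \<and> k = i then u k a else 0)) - (\<Sum>a<N. \<Sum>k<N. (if i = j \<and> a = k then u k a * (1/of_nat N) else 0))"
      by (simp only: sum_subtractf conj_commute[of "_ = _" "i = j"])
    also have "\<dots> = u i j - (if i = j then mtrace N u / of_nat N else 0)"
      using True by (simp only: dsum2 dtr mtrace_def) (simp add: sum_divide_distrib)
    finally show ?thesis using u by (simp add: in_sl_def)
  next
    case False
    hence "\<And>q. q < dm \<Longrightarrow> b q i j = 0" using b_out by auto
    moreover have "u i j = 0" using False u by (auto simp: in_sl_def)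
    ultimately show ?thesis by simp
  qed
qed

end

lemma line_deriv:
  assumes k1: "poly_fun N k1" and k2: "poly_fun N k2"
    and eq: "\<And>t. G (addm A t v) = k1 (addm A t v) + t * k2 (addm A t v)"
  shows "dd v G A = dd v k1 A + k2 A"
proof -
  have "((\<lambda>t. k1 (addm A t v) + t * k2 (addm A t v)) has_field_derivative
          dd v k1 A + (0 * dd v k2 A + 1 * k2 (addm A 0 v))) (at 0)"
    by (intro DERIV_add DERIV_mult' dd_has[OF k1] dd_has[OF k2] DERIV_ident)
  hence "((\<lambda>t. G (addm A t v)) has_field_derivative dd v k1 A + k2 A) (at 0)"
    by (simp add: eq)
  thus ?thesis by (rule dd_eqI)
qed

lemma lie_addm: "lie_br N X (addm A t v) = addm (lie_br N X A) t (lie_br N X v)"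
  by (simp add: lie_br_def addm_def mat_mult_def sum.distrib sum_distrib_left sum_subtractf algebra_simps fun_eq_iff)

lemma act_poly: "(\<And>w. poly_fun N (\<lambda>A. G A w)) \<Longrightarrow> poly_fun N (\<lambda>A. act_factor N i X (G A) w)"
  unfolding act_factor_def by (intro poly_sum poly_cmult) auto

lemma dd_act: "(\<And>w. poly_fun N (\<lambda>A. G A w)) \<Longrightarrow>
   dd v (\<lambda>A. act_factor N i X (G A) w) A = act_factor N i X (\<lambda>w'. dd v (\<lambda>A. G A w') A) w"
  unfolding act_factor_def by (simp add: dd_sum[where N=N] dd_cmult[where N=N] poly_cmult[where N=N])

lemma poly_act_sum: "(\<And>w. poly_fun N (\<lambda>A. G A w)) \<Longrightarrow> poly_fun N (\<lambda>A. \<Sum>i<n. act_factor N i X (G A) w)"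
  by (intro poly_sum act_poly) auto

lemma dd_act_sum: "(\<And>w. poly_fun N (\<lambda>A. G A w)) \<Longrightarrow>
   dd v (\<lambda>A. \<Sum>i<n. act_factor N i X (G A) w) A = (\<Sum>i<n. act_factor N i X (\<lambda>w'. dd v (\<lambda>A. G A w') A) w)"
  by (simp add: dd_sum[where N=N] act_poly dd_act)

locale vset = bas +
  fixes n :: nat and F :: "Defs.mat \<Rightarrow> tens"
  assumes FV: "F \<in> V N n" and npos: "0 < n"
begin

lemma fpoly: "poly_fun N (\<lambda>A. F A w)" using FV by (simp add: V_def)
lemma F_invalid: "\<not> valid_idx N n w \<Longrightarrow> F A w = 0" using FV by (simp add: V_def)
lemma INV: "in_sl N X \<Longrightarrow> in_sl N A \<Longrightarrow> valid_idx N n w \<Longrightarrow>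
   dd (lie_br N X A) (\<lambda>A. F A w) A = (\<Sum>i<n. act_factor N i X (F A) w)"
  using FV by (simp add: V_def dderiv_dd)

lemma ddfpoly: "poly_fun N (dd v (\<lambda>A. F A w))" by (rule dd_poly[OF fpoly])
lemma dd2fpoly: "poly_fun N (dd u (dd v (\<lambda>A. F A w)))" by (rule dd_poly[OF ddfpoly])

lemma dd_expand: "in_sl N u \<Longrightarrow> poly_fun N g \<Longrightarrow> dd u g A = (\<Sum>q<dm. coord N (b q) u * dd (b q) g A)"
proof -
  assume u: "in_sl N u" and g: "poly_fun N g"
  have "dd u g A = dd (\<lambda>i j. \<Sum>q<dm. coord N (b q) u * b q i j) g A" using EXP[OF u] by simp
  also have "\<dots> = (\<Sum>q<dm. coord N (b q) u * dd (b q) g A)" by (rule dd_dir_sum[where N=N]) (simp_all add: g)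
  finally show ?thesis .
qed

lemma DINV:
  assumes X: "in_sl N X" and A: "in_sl N A" and v: "in_sl N v" and w: "valid_idx N n w"
  shows "dd v (dd (lie_br N X A) (\<lambda>A. F A w)) A + dd (lie_br N X v) (\<lambda>A. F A w) A
     = (\<Sum>i<n. act_factor N i X (\<lambda>w'. dd v (\<lambda>A. F A w') A) w)"
proof -
  define G where "G = (\<lambda>A'. dd (lie_br N X A') (\<lambda>A. F A w) A')"
  define R where "R = (\<lambda>A'. \<Sum>i<n. act_factor N i X (F A') w)"
  have "\<And>A'. in_sl N A' \<Longrightarrow> G A' = R A'" unfolding G_def R_def using INV X w by simp
  hence "dd v G A = dd v R A" using dd_cong_sl A v by blast
  also have "dd v R A = (\<Sum>i<n. act_factor N i X (\<lambda>w'. dd v (\<lambda>A. F A w') A) w)"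
    unfolding R_def by (rule dd_act_sum) (rule fpoly)
  also have "dd v G A = dd v (dd (lie_br N X A) (\<lambda>A. F A w)) A + dd (lie_br N X v) (\<lambda>A. F A w) A"
    by (rule line_deriv[OF ddfpoly ddfpoly]) (simp add: G_def lie_addm dd_lin[OF fpoly])
  finally show ?thesis .
qed

lemma DDINV:
  assumes X: "in_sl N X" and A: "in_sl N A" and u: "in_sl N u" and v: "in_sl N v" and w: "valid_idx N n w"
  shows "dd u (dd v (dd (lie_br N X A) (\<lambda>A. F A w))) A + dd v (dd (lie_br N X u) (\<lambda>A. F A w)) A
      + dd u (dd (lie_br N X v) (\<lambda>A. F A w)) A
     = (\<Sum>i<n. act_factor N i X (\<lambda>w'. dd u (dd v (\<lambda>A. F A w')) A) w)"
proof -
  define H where "H = (\<lambda>A'. dd v (dd (lie_br N X A') (\<lambda>A. F A w)) A' + dd (lie_br N X v) (\<lambda>A. F A w) A')"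
  define R where "R = (\<lambda>A'. \<Sum>i<n. act_factor N i X (\<lambda>w'. dd v (\<lambda>A. F A w') A') w)"
  have "\<And>A'. in_sl N A' \<Longrightarrow> H A' = R A'" unfolding H_def R_def using DINV X v w by simp
  hence "dd u H A = dd u R A" using dd_cong_sl A u by blast
  also have "dd u R A = (\<Sum>i<n. act_factor N i X (\<lambda>w'. dd u (dd v (\<lambda>A. F A w')) A) w)"
    unfolding R_def by (rule dd_act_sum) (rule ddfpoly)
  also have "dd u H A = dd u (\<lambda>B. dd v (dd (lie_br N X A) (\<lambda>A. F A w)) B + dd (lie_br N X v) (\<lambda>A. F A w) B) A
      + dd v (dd (lie_br N X u) (\<lambda>A. F A w)) A"
  proof (rule line_deriv)
    show "poly_fun N (\<lambda>B. dd v (dd (lie_br N X A) (\<lambda>A. F A w)) B + dd (lie_br N X v) (\<lambda>A. F A w) B)"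
      by (intro poly_fun.pf_add dd2fpoly ddfpoly)
    show "poly_fun N (dd v (dd (lie_br N X u) (\<lambda>A. F A w)))" by (rule dd2fpoly)
    fix t
    have e: "dd (lie_br N X (addm A t u)) (\<lambda>A. F A w) = (\<lambda>B. dd (lie_br N X A) (\<lambda>A. F A w) B + t * dd (lie_br N X u) (\<lambda>A. F A w) B)"
      by (simp add: lie_addm dd_lin[OF fpoly] fun_eq_iff)
    show "H (addm A t u) = dd v (dd (lie_br N X A) (\<lambda>A. F A w)) (addm A t u) + dd (lie_br N X v) (\<lambda>A. F A w) (addm A t u)
       + t * dd v (dd (lie_br N X u) (\<lambda>A. F A w)) (addm A t u)"
      unfolding H_def e by (simp add: dd_add[where N=N] dd_cmult[where N=N] ddfpoly dd2fpoly poly_cmult[where N=N] algebra_simps)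
  qed
  also have "dd u (\<lambda>B. dd v (dd (lie_br N X A) (\<lambda>A. F A w)) B + dd (lie_br N X v) (\<lambda>A. F A w) B) A
     = dd u (dd v (dd (lie_br N X A) (\<lambda>A. F A w))) A + dd u (dd (lie_br N X v) (\<lambda>A. F A w)) A"
    by (rule dd_add[OF dd2fpoly ddfpoly])
  finally show ?thesis by (simp add: algebra_simps)
qed

end

lemma act_mm: "i < length w \<Longrightarrow>
  act_factor N i X (\<lambda>w'. act_factor N i Y T w') w = act_factor N i (mat_mult N X Y) T w"
proof -
  assume i: "i < length w"
  have "act_factor N i X (\<lambda>w'. act_factor N i Y T w') w = (\<Sum>k<N. \<Sum>l<N. X (w ! i) k * (Y k l * T (w[i := l])))"
    using i by (simp add: act_factor_def sum_distrib_left)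
  also have "\<dots> = (\<Sum>l<N. \<Sum>k<N. X (w ! i) k * (Y k l * T (w[i := l])))" by (rule sum.swap)
  also have "\<dots> = act_factor N i (mat_mult N X Y) T w"
    by (simp add: act_factor_def mat_mult_def sum_distrib_right mult.assoc)
  finally show ?thesis .
qed

lemma act_lin_T: "act_factor N i X (\<lambda>w'. c * (\<Sum>p\<in>S. T p w')) w = c * (\<Sum>p\<in>S. act_factor N i X (T p) w)"
  unfolding act_factor_def by (simp add: sum_distrib_left, subst sum.swap, simp add: mult_ac)

lemma act_add_T: "act_factor N i X (\<lambda>w'. T1 w' + T2 w') w = act_factor N i X T1 w + act_factor N i X T2 w"
  unfolding act_factor_def by (simp add: sum.distrib algebra_simps)

lemma act_lin_X: "act_factor N i (\<lambda>a c. P a c + Q a c - s * R a c) T w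
   = act_factor N i P T w + act_factor N i Q T w - s * act_factor N i R T w"
  unfolding act_factor_def by (simp add: sum.distrib sum_subtractf sum_distrib_left algebra_simps)

lemma act_lin_X2: "act_factor N i (\<lambda>a c. P a c - s * R a c) T w
   = act_factor N i P T w - s * act_factor N i R T w"
  unfolding act_factor_def by (simp add: sum.distrib sum_subtractf sum_distrib_left algebra_simps)

lemma act_idm: "i < length w \<Longrightarrow> w ! i < N \<Longrightarrow> act_factor N i (idm N) T w = T w"
proof -
  assume i: "i < length w" and wi: "w ! i < N"
  have "act_factor N i (idm N) T w = (\<Sum>k<N. if w ! i = k then T (w[i := k]) else 0)"
    unfolding act_factor_def idm_def by (intro sum.cong refl) auto
  also have "\<dots> = T (w[i := w ! i])" using wi by (simp add: sdelta')
  finally show ?thesis by simp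
qed

lemma act_scal_X: "act_factor N i (\<lambda>a c. s * P a c) T w = s * act_factor N i P T w"
  unfolding act_factor_def by (simp add: sum_distrib_left mult_ac)

lemma act_sum_X: "act_factor N i (\<lambda>a c. \<Sum>p\<in>S. P p a c) T w = (\<Sum>p\<in>S. act_factor N i (P p) T w)"
  unfolding act_factor_def by (simp add: sum_distrib_right, subst sum.swap, simp)

lemma act_cong: "i < length w \<Longrightarrow> (\<And>k. k < N \<Longrightarrow> T (w[i := k]) = T' (w[i := k])) \<Longrightarrow>
   act_factor N i X T w = act_factor N i X T' w"
  unfolding act_factor_def by (intro sum.cong refl) auto

lemma mm3_l: "mat_mult N (\<lambda>a c. P a c + Q a c - s * R a c) M = (\<lambda>i j. mat_mult N P M i j + mat_mult N Q M i j - s * mat_mult N R M i j)"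
  by (simp add: mat_mult_def sum.distrib sum_subtractf sum_distrib_left algebra_simps fun_eq_iff)
lemma mm3_r: "mat_mult N M (\<lambda>a c. P a c + Q a c - s * R a c) = (\<lambda>i j. mat_mult N M P i j + mat_mult N M Q i j - s * mat_mult N M R i j)"
  by (simp add: mat_mult_def sum.distrib sum_subtractf sum_distrib_left algebra_simps fun_eq_iff)
lemma mm2_l: "mat_mult N (\<lambda>a c. P a c - s * R a c) M = (\<lambda>i j. mat_mult N P M i j - s * mat_mult N R M i j)"
  by (simp add: mat_mult_def sum.distrib sum_subtractf sum_distrib_left algebra_simps fun_eq_iff)
lemma mm2_r: "mat_mult N M (\<lambda>a c. P a c - s * R a c) = (\<lambda>i j. mat_mult N M P i j - s * mat_mult N M R i j)"
  by (simp add: mat_mult_def sum.distrib sum_subtractf sum_distrib_left algebra_simps fun_eq_iff)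
lemma mm_scal_l: "mat_mult N (\<lambda>a c. s * P a c) M = (\<lambda>i j. s * mat_mult N P M i j)"
  by (simp add: mat_mult_def sum_distrib_left algebra_simps fun_eq_iff)
lemma mm_scal_r: "mat_mult N M (\<lambda>a c. s * P a c) = (\<lambda>i j. s * mat_mult N M P i j)"
  by (simp add: mat_mult_def sum_distrib_left algebra_simps fun_eq_iff)

lemma lie_XA: "blk N A \<Longrightarrow> blk N B \<Longrightarrow>
  lie_br N (\<lambda>a c. mat_mult N A B a c + mat_mult N B A a c - s * idm N a c) A
   = (\<lambda>i j. mat_mult N B (mat_mult N A A) i j - mat_mult N (mat_mult N A A) B i j)"
  by (simp add: lie_br_def mm3_l mm3_r mm_idm_l mm_idm_r mm_assoc fun_eq_iff)

lemma lie_Xb: "blk N A \<Longrightarrow> blk N B \<Longrightarrow>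
  lie_br N (\<lambda>a c. mat_mult N A B a c + mat_mult N B A a c - s * idm N a c) B
   = (\<lambda>i j. mat_mult N A (mat_mult N B B) i j - mat_mult N (mat_mult N B B) A i j)"
  by (simp add: lie_br_def mm3_l mm3_r mm_idm_l mm_idm_r mm_assoc fun_eq_iff)

lemma lie_idm: "blk N Y \<Longrightarrow> lie_br N (\<lambda>a c. P a c - s * idm N a c) Y = lie_br N P Y"
  by (simp add: lie_br_def mm2_l mm2_r mm_idm_l mm_idm_r fun_eq_iff)

lemma coord_scal: "coord N B (\<lambda>i j. c * P i j) = c * coord N B P"
  using coord_lin[of N B c P 0 P] by simp
lemma coord_diff: "coord N B (\<lambda>i j. P i j - Q i j) = coord N B P - coord N B Q"
  using coord_lin[of N B 1 P "-1" Q] by simp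
lemma coord_sum_c: "coord N B (\<lambda>i j. \<Sum>q\<in>S. c q * P q i j) = (\<Sum>q\<in>S. c q * coord N B (P q))"
  by (simp add: coord_sum coord_scal)

lemma anti_sum: "(\<And>p r. D p r = D r p) \<Longrightarrow>
   (\<Sum>p\<in>S. \<Sum>r\<in>S. (s r p - s p r) * (D p r :: complex)) = 0"
proof -
  assume D: "\<And>p r. D p r = D r p"
  have "(\<Sum>p\<in>S. \<Sum>r\<in>S. (s r p - s p r) * D p r) = (\<Sum>p\<in>S. \<Sum>r\<in>S. s r p * D p r) - (\<Sum>p\<in>S. \<Sum>r\<in>S. s p r * D p r)"
    by (simp add: left_diff_distrib sum_subtractf)
  also have "(\<Sum>p\<in>S. \<Sum>r\<in>S. s p r * D p r) = (\<Sum>r\<in>S. \<Sum>p\<in>S. s p r * D p r)" by (rule sum.swap)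
  also have "\<dots> = (\<Sum>r\<in>S. \<Sum>p\<in>S. s p r * D r p)" using D by simp
  finally show ?thesis by simp
qed

lemma cyc_sum: "(\<And>p q r. D q r p = D p q r) \<Longrightarrow>
   (\<Sum>p\<in>S. \<Sum>q\<in>S. \<Sum>r\<in>S. (t r p q - t p q r) * (D p q r :: complex)) = 0"
proof -
  assume D: "\<And>p q r. D q r p = D p q r"
  have "(\<Sum>p\<in>S. \<Sum>q\<in>S. \<Sum>r\<in>S. (t r p q - t p q r) * D p q r) =
     (\<Sum>p\<in>S. \<Sum>q\<in>S. \<Sum>r\<in>S. t r p q * D p q r) - (\<Sum>p\<in>S. \<Sum>q\<in>S. \<Sum>r\<in>S. t p q r * D p q r)"
    by (simp add: left_diff_distrib sum_subtractf)
  also have "(\<Sum>p\<in>S. \<Sum>q\<in>S. \<Sum>r\<in>S. t p q r * D p q r) = (\<Sum>p\<in>S. \<Sum>q\<in>S. \<Sum>r\<in>S. t p q r * D q r p)"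
    using D by simp
  also have "\<dots> = (\<Sum>q\<in>S. \<Sum>r\<in>S. \<Sum>p\<in>S. t p q r * D q r p)" by (rule swap3)
  finally show ?thesis by simp
qed

context vset begin

lemma valid_len: "valid_idx N n w \<Longrightarrow> i < n \<Longrightarrow> i < length w"
  by (simp add: valid_idx_def)
lemma valid_nth: "valid_idx N n w \<Longrightarrow> i < n \<Longrightarrow> w ! i < N"
  by (simp add: valid_idx_def)

lemma Nne: "(of_nat N :: complex) \<noteq> 0" using Npos by simp

lemma E3: "in_sl N A \<Longrightarrow> (\<Sum>p<dm. (coord N (b p) A)\<^sup>2) = mtrace N (mat_mult N A A)"
proof -
  assume A: "in_sl N A"
  have "(\<Sum>p<dm. (coord N (b p) A)\<^sup>2) = (\<Sum>p<dm. coord N (b p) A * coord N A (b p))"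
    by (simp add: power2_eq_square coord_comm)
  also have "\<dots> = coord N A (\<lambda>i j. \<Sum>p<dm. coord N (b p) A * b p i j)" by (simp add: coord_sum_c)
  also have "\<dots> = coord N A A" using EXP[OF A] by simp
  finally show ?thesis by (simp add: coord_def)
qed

lemma Fpart:
  assumes A: "in_sl N A" and w: "valid_idx N n w"
  shows "fbold N n F A w = (of_nat n / of_nat N) * Fop N b F A w"
proof -
  define c where "c = mtrace N (mat_mult N A A) / of_nat N"
  define X where "X = (\<lambda>a d. mat_mult N A A a d - c * idm N a d)"
  have Ab: "blk N A" using A sl_blk by blast
  have Xsl: "in_sl N X"
  proof -
    have "mtrace N X = mtrace N (mat_mult N A A) - c * of_nat N"
      unfolding X_def using tr_lin[of N 1 "mat_mult N A A" "-c" "idm N"] by (simp add: mtrace_idm)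
    hence "mtrace N X = 0" using Nne by (simp add: c_def)
    moreover have "blk N X" using mm_blk[OF Ab Ab] idm_blk unfolding X_def blk_def by auto
    ultimately show ?thesis by (simp add: in_sl_def blk_def)
  qed
  have lie0: "lie_br N X A = (\<lambda>i j. 0)"
    unfolding X_def lie_idm[OF Ab] by (simp add: lie_br_def mm_assoc)
  have "0 = (\<Sum>i<n. act_factor N i X (F A) w)"
    using INV[OF Xsl A w] lie0 dd_zero_dir[OF fpoly] by simp
  also have "\<dots> = (\<Sum>i<n. act_factor N i (mat_mult N A A) (F A) w - c * F A w)"
    unfolding X_def using w by (intro sum.cong refl) (simp add: act_lin_X2 act_idm valid_len valid_nth)
  finally have key: "(\<Sum>i<n. act_factor N i (mat_mult N A A) (F A) w) = of_nat n * c * F A w"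
    by (simp add: sum_subtractf)
  have "fbold N n F A w = 1/2 * (\<Sum>i<n. act_factor N i (mat_mult N A A) (F A) w)"
    unfolding fbold_def xop_def using w by (simp add: act_mm valid_len)
  also have "\<dots> = (of_nat n / of_nat N) * Fop N b F A w"
    unfolding key Fop_def E3[OF A] c_def by (simp add: field_simps)
  finally show ?thesis .
qed

lemma dderiv_fun: "dderiv v G A = (\<lambda>w. dd v (\<lambda>A. G A w) A)"
  by (simp add: fun_eq_iff dderiv_dd)

lemma xy: "valid_idx N n w \<Longrightarrow> i < n \<Longrightarrow> xop N i (yop N n b i F) A w =
   (of_nat N / of_nat n) * (\<Sum>p<dm. act_factor N i (mat_mult N A (b p)) (\<lambda>w'. dd (b p) (\<lambda>A. F A w') A) w)"
  unfolding xop_def yop_def dderiv_fun act_lin_T by (simp add: act_mm valid_len)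

lemma dd_xop: "w' ! i < N \<Longrightarrow> dd v (\<lambda>A'. act_factor N i A' (F A') w') A =
   act_factor N i v (F A) w' + act_factor N i A (\<lambda>w''. dd v (\<lambda>A. F A w'') A) w'"
proof -
  assume wi: "w' ! i < N"
  have cp: "\<And>k. k < N \<Longrightarrow> poly_fun N (\<lambda>A. A (w' ! i) k)" using wi by (simp add: poly_fun.pf_coord)
  have "dd v (\<lambda>A'. act_factor N i A' (F A') w') A = dd v (\<lambda>A'. \<Sum>k<N. A' (w' ! i) k * F A' (w'[i := k])) A"
    by (simp add: act_factor_def)
  also have "\<dots> = (\<Sum>k<N. dd v (\<lambda>A'. A' (w' ! i) k * F A' (w'[i := k])) A)"
    using cp by (intro dd_sum[where N=N]) (auto intro: poly_fun.pf_mult fpoly)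
  also have "\<dots> = (\<Sum>k<N. v (w' ! i) k * F A (w'[i := k]) + A (w' ! i) k * dd v (\<lambda>A. F A (w'[i := k])) A)"
    using cp by (intro sum.cong refl) (simp add: dd_mult[where N=N] fpoly dd_coord)
  finally show ?thesis by (simp add: act_factor_def sum.distrib)
qed

lemma yx: "valid_idx N n w \<Longrightarrow> i < n \<Longrightarrow> yop N n b i (xop N i F) A w =
   (of_nat N / of_nat n) * (\<Sum>p<dm. act_factor N i (mat_mult N (b p) (b p)) (F A) w
      + act_factor N i (mat_mult N (b p) A) (\<lambda>w'. dd (b p) (\<lambda>A. F A w') A) w)"
proof -
  assume w: "valid_idx N n w" and i: "i < n"
  have il: "i < length w" using w i by (rule valid_len)
  have "\<And>p. act_factor N i (b p) (dderiv (b p) (xop N i F) A) w =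
      act_factor N i (b p) (\<lambda>w'. act_factor N i (b p) (F A) w' + act_factor N i A (\<lambda>w''. dd (b p) (\<lambda>A. F A w'') A) w') w"
  proof (rule act_cong[OF il])
    fix p k assume k: "k < N"
    have "w[i := k] ! i = k" using il by simp
    thus "dderiv (b p) (xop N i F) A (w[i := k]) = act_factor N i (b p) (F A) (w[i := k]) +
        act_factor N i A (\<lambda>w''. dd (b p) (\<lambda>A. F A w'') A) (w[i := k])"
      using k by (simp add: dderiv_dd xop_def dd_xop)
  qed
  thus ?thesis unfolding yop_def by (simp add: act_add_T act_mm il)
qed

lemma tr_XA: "mtrace N (\<lambda>a c. P a c + Q a c - s * R a c) = mtrace N P + mtrace N Q - s * mtrace N R"
  by (simp add: mtrace_def sum.distrib sum_subtractf sum_distrib_left)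

lemma Hzero1: "in_sl N A \<Longrightarrow> (\<Sum>p<dm. dd (b p) (dd (lie_br N (\<lambda>a c. mat_mult N A (b p) a c + mat_mult N (b p) A a c - s p * idm N a c) A) (\<lambda>A. F A w)) A) = 0"
proof -
  assume A: "in_sl N A"
  have Ab: "blk N A" using A sl_blk by blast
  define s2 where "s2 = (\<lambda>r p. mtrace N (mat_mult N (mat_mult N (b r) (b p)) (mat_mult N A A)))"
  define D where "D = (\<lambda>p r. dd (b p) (dd (b r) (\<lambda>A. F A w)) A)"
  have "\<And>p. p < dm \<Longrightarrow> dd (b p) (dd (lie_br N (\<lambda>a c. mat_mult N A (b p) a c + mat_mult N (b p) A a c - s p * idm N a c) A) (\<lambda>A. F A w)) A
      = (\<Sum>r<dm. (s2 r p - s2 p r) * D p r)"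
  proof -
    fix p assume p: "p < dm"
    define X where "X = (\<lambda>a c. mat_mult N A (b p) a c + mat_mult N (b p) A a c - s p * idm N a c)"
    have Xb: "blk N X" unfolding X_def using mm_blk[OF Ab b_blk[OF p]] mm_blk[OF b_blk[OF p] Ab] idm_blk
      by (auto simp: blk_def)
    have Lsl: "in_sl N (lie_br N X A)" by (rule lie_sl[OF Xb Ab])
    have L: "lie_br N X A = (\<lambda>i j. mat_mult N (b p) (mat_mult N A A) i j - mat_mult N (mat_mult N A A) (b p) i j)"
      unfolding X_def by (rule lie_XA[OF Ab b_blk[OF p]])
    have co: "\<And>r. coord N (b r) (lie_br N X A) = s2 r p - s2 p r"
    proof -
      fix r
      have "coord N (b r) (lie_br N X A) = coord N (b r) (mat_mult N (b p) (mat_mult N A A)) - coord N (b r) (mat_mult N (mat_mult N A A) (b p))"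
        unfolding L by (rule coord_diff)
      also have "coord N (b r) (mat_mult N (b p) (mat_mult N A A)) = s2 r p"
        by (simp add: coord_def s2_def mm_assoc)
      also have "coord N (b r) (mat_mult N (mat_mult N A A) (b p)) = s2 p r"
      proof -
        have "coord N (b r) (mat_mult N (mat_mult N A A) (b p)) = mtrace N (mat_mult N (mat_mult N (mat_mult N A A) (b p)) (b r))"
          by (simp add: coord_def tr_comm)
        also have "\<dots> = mtrace N (mat_mult N (mat_mult N A A) (mat_mult N (b p) (b r)))" by (simp add: mm_assoc)
        also have "\<dots> = s2 p r" by (simp add: s2_def tr_comm)
        finally show ?thesis .
      qed
      finally show "coord N (b r) (lie_br N X A) = s2 r p - s2 p r" .
    qed
    have "dd (lie_br N X A) (\<lambda>A. F A w) = (\<lambda>B. \<Sum>r<dm. coord N (b r) (lie_br N X A) * dd (b r) (\<lambda>A. F A w) B)"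
      using dd_expand[OF Lsl fpoly] by (simp add: fun_eq_iff)
    hence "dd (b p) (dd (lie_br N X A) (\<lambda>A. F A w)) A = (\<Sum>r<dm. coord N (b r) (lie_br N X A) * dd (b p) (dd (b r) (\<lambda>A. F A w)) A)"
      by (simp add: dd_sum[where N=N] dd_cmult[where N=N] poly_cmult[where N=N] ddfpoly)
    thus "dd (b p) (dd (lie_br N (\<lambda>a c. mat_mult N A (b p) a c + mat_mult N (b p) A a c - s p * idm N a c) A) (\<lambda>A. F A w)) A
      = (\<Sum>r<dm. (s2 r p - s2 p r) * D p r)" unfolding X_def[symmetric] co D_def .
  qed
  hence "(\<Sum>p<dm. dd (b p) (dd (lie_br N (\<lambda>a c. mat_mult N A (b p) a c + mat_mult N (b p) A a c - s p * idm N a c) A) (\<lambda>A. F A w)) A)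
     = (\<Sum>p<dm. \<Sum>r<dm. (s2 r p - s2 p r) * D p r)" by simp
  also have "\<dots> = 0" by (rule anti_sum) (simp add: D_def dd_comm[OF fpoly])
  finally show ?thesis .
qed

lemma Hzero2: "in_sl N A \<Longrightarrow> (\<Sum>p<dm. dd (lie_br N (\<lambda>a c. mat_mult N A (b p) a c + mat_mult N (b p) A a c - s p * idm N a c) (b p)) (\<lambda>A. F A w) A) = 0"
proof -
  assume A: "in_sl N A"
  have Ab: "blk N A" using A sl_blk by blast
  define M where "M = (\<lambda>p i j. mat_mult N A (mat_mult N (b p) (b p)) i j - mat_mult N (mat_mult N (b p) (b p)) A i j)"
  have "(\<Sum>p<dm. dd (lie_br N (\<lambda>a c. mat_mult N A (b p) a c + mat_mult N (b p) A a c - s p * idm N a c) (b p)) (\<lambda>A. F A w) A)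
     = (\<Sum>p<dm. 1 * dd (M p) (\<lambda>A. F A w) A)"
    by (intro sum.cong refl) (simp add: lie_Xb[OF Ab b_blk] M_def)
  also have "\<dots> = dd (\<lambda>i j. \<Sum>p<dm. 1 * M p i j) (\<lambda>A. F A w) A"
    by (rule dd_dir_sum[where N=N, symmetric]) (simp_all add: fpoly)
  also have "(\<lambda>i j. \<Sum>p<dm. 1 * M p i j) = (\<lambda>i j. mat_mult N A (\<lambda>a c. \<Sum>p<dm. mat_mult N (b p) (b p) a c) i j
       - mat_mult N (\<lambda>a c. \<Sum>p<dm. mat_mult N (b p) (b p) a c) A i j)"
    by (simp add: M_def mm_sum_l mm_sum_r sum_subtractf)
  also have "\<dots> = (\<lambda>i j. 0)"
    by (simp only: CAS2 mm_scal_l mm_scal_r mm_idm_l[OF Ab] mm_idm_r[OF Ab]) simp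
  finally show ?thesis using dd_zero_dir[OF fpoly] by simp
qed

lemma Hsum:
  assumes A: "in_sl N A" and w: "valid_idx N n w"
  shows "(\<Sum>p<dm. \<Sum>i<n. act_factor N i (mat_mult N A (b p)) (\<lambda>w'. dd (b p) (\<lambda>A. F A w') A) w
      + act_factor N i (mat_mult N (b p) A) (\<lambda>w'. dd (b p) (\<lambda>A. F A w') A) w)
    = 2 * of_nat n / of_nat N * (\<Sum>p<dm. coord N (b p) A * dd (b p) (\<lambda>A. F A w) A)"
proof -
  have Ab: "blk N A" using A sl_blk by blast
  define s where "s = (\<lambda>p. 2 * coord N (b p) A / of_nat N)"
  define X where "X = (\<lambda>p a c. mat_mult N A (b p) a c + mat_mult N (b p) A a c - s p * idm N a c)"
  define T where "T = (\<lambda>p w'. dd (b p) (\<lambda>A. F A w') A)"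
  have step: "\<And>p. p < dm \<Longrightarrow> (\<Sum>i<n. act_factor N i (mat_mult N A (b p)) (T p) w + act_factor N i (mat_mult N (b p) A) (T p) w)
      = dd (b p) (dd (lie_br N (X p) A) (\<lambda>A. F A w)) A + dd (lie_br N (X p) (b p)) (\<lambda>A. F A w) A
        + of_nat n * s p * T p w"
  proof -
    fix p assume p: "p < dm"
    have Xsl: "in_sl N (X p)"
    proof -
      have "mtrace N (X p) = 0" unfolding X_def tr_XA
        using Nne by (simp add: mtrace_idm s_def coord_def tr_comm[of N A])
      moreover have "blk N (X p)" unfolding X_def using mm_blk[OF Ab b_blk[OF p]] mm_blk[OF b_blk[OF p] Ab] idm_blk
        by (auto simp: blk_def)
      ultimately show ?thesis by (simp add: in_sl_def blk_def)
    qed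
    have "dd (b p) (dd (lie_br N (X p) A) (\<lambda>A. F A w)) A + dd (lie_br N (X p) (b p)) (\<lambda>A. F A w) A
        = (\<Sum>i<n. act_factor N i (X p) (T p) w)"
      unfolding T_def by (rule DINV[OF Xsl A b_sl[OF p] w])
    also have "\<dots> = (\<Sum>i<n. act_factor N i (mat_mult N A (b p)) (T p) w + act_factor N i (mat_mult N (b p) A) (T p) w - s p * T p w)"
      unfolding X_def using w by (intro sum.cong refl) (simp add: act_lin_X act_idm valid_len valid_nth)
    finally show "(\<Sum>i<n. act_factor N i (mat_mult N A (b p)) (T p) w + act_factor N i (mat_mult N (b p) A) (T p) w)
      = dd (b p) (dd (lie_br N (X p) A) (\<lambda>A. F A w)) A + dd (lie_br N (X p) (b p)) (\<lambda>A. F A w) A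
        + of_nat n * s p * T p w" by (simp add: sum_subtractf)
  qed
  have "(\<Sum>p<dm. \<Sum>i<n. act_factor N i (mat_mult N A (b p)) (T p) w + act_factor N i (mat_mult N (b p) A) (T p) w)
     = (\<Sum>p<dm. dd (b p) (dd (lie_br N (X p) A) (\<lambda>A. F A w)) A) + (\<Sum>p<dm. dd (lie_br N (X p) (b p)) (\<lambda>A. F A w) A)
       + (\<Sum>p<dm. of_nat n * s p * T p w)"
    using step by (simp add: sum.distrib)
  also have "\<dots> = (\<Sum>p<dm. of_nat n * s p * T p w)"
    unfolding X_def using Hzero1[OF A] Hzero2[OF A] by simp
  also have "\<dots> = 2 * of_nat n / of_nat N * (\<Sum>p<dm. coord N (b p) A * dd (b p) (\<lambda>A. F A w) A)"
    by (simp add: s_def T_def sum_distrib_left mult_ac)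
  finally show ?thesis unfolding T_def .
qed

lemma CASact: "valid_idx N n w \<Longrightarrow> i < n \<Longrightarrow>
   (\<Sum>p<dm. act_factor N i (mat_mult N (b p) (b p)) T w) = (of_nat N - 1/of_nat N) * T w"
proof -
  assume w: "valid_idx N n w" and i: "i < n"
  have "(\<Sum>p<dm. act_factor N i (mat_mult N (b p) (b p)) T w) = act_factor N i (\<lambda>a c. \<Sum>p<dm. mat_mult N (b p) (b p) a c) T w"
    by (rule act_sum_X[symmetric])
  also have "\<dots> = act_factor N i (\<lambda>a c. (of_nat N - 1/of_nat N) * idm N a c) T w" by (simp only: CAS2)
  also have "\<dots> = (of_nat N - 1/of_nat N) * T w"
    using w i by (simp add: act_scal_X act_idm valid_len valid_nth)
  finally show ?thesis .
qed

lemma dimN: "(of_nat (dim_sl N) :: complex) = of_nat N * of_nat N - 1"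
proof -
  have "1 \<le> N * N" using Npos by (simp add: Suc_le_eq)
  thus ?thesis by (simp add: dim_sl_def power2_eq_square of_nat_diff)
qed

lemma Hpart:
  assumes A: "in_sl N A" and w: "valid_idx N n w"
  shows "hbold N n b F A w = Hop N b F A w"
proof -
  define c0 :: complex where "c0 = of_nat N / of_nat n"
  define \<kappa> :: complex where "\<kappa> = of_nat N - 1/of_nat N"
  define T where "T = (\<lambda>p w'. dd (b p) (\<lambda>A. F A w') A)"
  define Q where "Q = (\<lambda>p i. act_factor N i (mat_mult N A (b p)) (T p) w + act_factor N i (mat_mult N (b p) A) (T p) w)"
  have each: "\<And>i. i < n \<Longrightarrow> xop N i (yop N n b i F) A w + yop N n b i (xop N i F) A w
      = c0 * (\<Sum>p<dm. Q p i) + c0 * \<kappa> * F A w"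
  proof -
    fix i assume i: "i < n"
    have "xop N i (yop N n b i F) A w + yop N n b i (xop N i F) A w
       = c0 * (\<Sum>p<dm. act_factor N i (mat_mult N A (b p)) (T p) w) + c0 * ((\<Sum>p<dm. act_factor N i (mat_mult N (b p) (b p)) (F A) w)
          + (\<Sum>p<dm. act_factor N i (mat_mult N (b p) A) (T p) w))"
      unfolding xy[OF w i] yx[OF w i] c0_def T_def by (simp add: sum.distrib)
    also have "\<dots> = c0 * (\<Sum>p<dm. Q p i) + c0 * \<kappa> * F A w"
      unfolding CASact[OF w i] Q_def \<kappa>_def by (simp add: sum.distrib algebra_simps)
    finally show "xop N i (yop N n b i F) A w + yop N n b i (xop N i F) A w
      = c0 * (\<Sum>p<dm. Q p i) + c0 * \<kappa> * F A w" .
  qed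
  have "hbold N n b F A w = 1/2 * (\<Sum>i<n. c0 * (\<Sum>p<dm. Q p i) + c0 * \<kappa> * F A w)"
    unfolding hbold_def using each by simp
  also have "\<dots> = 1/2 * (c0 * (\<Sum>p<dm. \<Sum>i<n. Q p i) + of_nat n * c0 * \<kappa> * F A w)"
    by (simp add: sum.distrib sum_distrib_left[symmetric] sum.swap[of _ "{..<n}"])
  also have "(\<Sum>p<dm. \<Sum>i<n. Q p i) = 2 * of_nat n / of_nat N * (\<Sum>p<dm. coord N (b p) A * dd (b p) (\<lambda>A. F A w) A)"
    unfolding Q_def T_def by (rule Hsum[OF A w])
  also have "1/2 * (c0 * (2 * of_nat n / of_nat N * (\<Sum>p<dm. coord N (b p) A * dd (b p) (\<lambda>A. F A w) A)) + of_nat n * c0 * \<kappa> * F A w)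
     = (\<Sum>p<dm. coord N (b p) A * dd (b p) (\<lambda>A. F A w) A) + (of_nat N * of_nat N - 1) / 2 * F A w"
    using Nne npos by (simp add: c0_def \<kappa>_def field_simps)
  also have "\<dots> = Hop N b F A w" unfolding Hop_def dimN by (simp add: dderiv_dd)
  finally show ?thesis .
qed

end

context vset begin

lemma CAS1p: "blk N Y \<Longrightarrow> (\<Sum>p<dm. mat_mult N (b p) (mat_mult N Y (b p)) i j) = mtrace N Y * idm N i j - Y i j / of_nat N"
  using CAS1[of Y] by (simp add: fun_eq_iff)
lemma CAS2p: "(\<Sum>p<dm. mat_mult N (b p) (b p) i j) = (of_nat N - 1/of_nat N) * idm N i j"
  using CAS2 by (simp add: fun_eq_iff)

lemma tr_b: "p < dm \<Longrightarrow> mtrace N (b p) = 0" using b_sl by (simp add: in_sl_def)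

lemma CT2: "q < dm \<Longrightarrow> r < dm \<Longrightarrow>
  (\<Sum>p<dm. coord N (b r) (lie_br N (mat_mult N (b p) (b q)) (b p))) = - of_nat N * (if r = q then 1 else 0)"
proof -
  assume q: "q < dm" and r: "r < dm"
  have M: "(\<lambda>i j. \<Sum>p<dm. lie_br N (mat_mult N (b p) (b q)) (b p) i j) = (\<lambda>i j. - of_nat N * b q i j)"
  proof (intro ext)
    fix i j
    have "(\<Sum>p<dm. lie_br N (mat_mult N (b p) (b q)) (b p) i j)
       = (\<Sum>p<dm. mat_mult N (b p) (mat_mult N (b q) (b p)) i j) - (\<Sum>p<dm. mat_mult N (mat_mult N (b p) (b p)) (b q) i j)"
      by (simp add: lie_br_def mm_assoc sum_subtractf)
    also have "(\<Sum>p<dm. mat_mult N (mat_mult N (b p) (b p)) (b q) i j) = mat_mult N (\<lambda>a c. \<Sum>p<dm. mat_mult N (b p) (b p) a c) (b q) i j"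
      by (simp add: mm_sum_l)
    also have "\<dots> = (of_nat N - 1/of_nat N) * b q i j"
      by (simp only: CAS2 mm_scal_l mm_idm_l[OF b_blk[OF q]])
    also have "(\<Sum>p<dm. mat_mult N (b p) (mat_mult N (b q) (b p)) i j) = - b q i j / of_nat N"
      by (simp add: CAS1p[OF b_blk[OF q]] tr_b[OF q])
    finally show "(\<Sum>p<dm. lie_br N (mat_mult N (b p) (b q)) (b p) i j) = - of_nat N * b q i j"
      using Nne by (simp add: field_simps)
  qed
  have "(\<Sum>p<dm. coord N (b r) (lie_br N (mat_mult N (b p) (b q)) (b p))) = coord N (b r) (\<lambda>i j. \<Sum>p<dm. lie_br N (mat_mult N (b p) (b q)) (b p) i j)"
    by (rule coord_sum[symmetric])
  also have "\<dots> = - of_nat N * coord N (b r) (b q)" unfolding M by (rule coord_scal)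
  finally show ?thesis using b_orth[OF r q] by simp
qed

lemma CT3: "p < dm \<Longrightarrow> r < dm \<Longrightarrow>
  (\<Sum>q<dm. coord N (b r) (lie_br N (mat_mult N (b p) (b q)) (b q))) = of_nat N * (if r = p then 1 else 0)"
proof -
  assume p: "p < dm" and r: "r < dm"
  have M: "(\<lambda>i j. \<Sum>q<dm. lie_br N (mat_mult N (b p) (b q)) (b q) i j) = (\<lambda>i j. of_nat N * b p i j)"
  proof (intro ext)
    fix i j
    have "(\<Sum>q<dm. lie_br N (mat_mult N (b p) (b q)) (b q) i j)
       = (\<Sum>q<dm. mat_mult N (b p) (mat_mult N (b q) (b q)) i j) - (\<Sum>q<dm. mat_mult N (b q) (mat_mult N (b p) (b q)) i j)"
      by (simp add: lie_br_def mm_assoc sum_subtractf)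
    also have "(\<Sum>q<dm. mat_mult N (b p) (mat_mult N (b q) (b q)) i j) = mat_mult N (b p) (\<lambda>a c. \<Sum>q<dm. mat_mult N (b q) (b q) a c) i j"
      by (simp add: mm_sum_r)
    also have "\<dots> = (of_nat N - 1/of_nat N) * b p i j"
      by (simp only: CAS2 mm_scal_r mm_idm_r[OF b_blk[OF p]])
    also have "(\<Sum>q<dm. mat_mult N (b q) (mat_mult N (b p) (b q)) i j) = - b p i j / of_nat N"
      by (simp add: CAS1p[OF b_blk[OF p]] tr_b[OF p])
    finally show "(\<Sum>q<dm. lie_br N (mat_mult N (b p) (b q)) (b q) i j) = of_nat N * b p i j"
      using Nne by (simp add: field_simps)
  qed
  have "(\<Sum>q<dm. coord N (b r) (lie_br N (mat_mult N (b p) (b q)) (b q))) = coord N (b r) (\<lambda>i j. \<Sum>q<dm. lie_br N (mat_mult N (b p) (b q)) (b q) i j)"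
    by (rule coord_sum[symmetric])
  also have "\<dots> = of_nat N * coord N (b r) (b p)" unfolding M by (rule coord_scal)
  finally show ?thesis using b_orth[OF r p] by simp
qed

lemma yy: "valid_idx N n w \<Longrightarrow> i < n \<Longrightarrow> yop N n b i (yop N n b i F) A w =
   (of_nat N / of_nat n) * (\<Sum>p<dm. (of_nat N / of_nat n) * (\<Sum>q<dm. act_factor N i (mat_mult N (b p) (b q))
        (\<lambda>w'. dd (b p) (dd (b q) (\<lambda>A. F A w')) A) w))"
proof -
  assume w: "valid_idx N n w" and i: "i < n"
  have il: "i < length w" using w i by (rule valid_len)
  have d: "\<And>p. dderiv (b p) (yop N n b i F) A = (\<lambda>w'. (of_nat N / of_nat n) *
      (\<Sum>q<dm. act_factor N i (b q) (\<lambda>w''. dd (b p) (dd (b q) (\<lambda>A. F A w'')) A) w'))"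
  proof -
    fix p
    have "\<And>w'. dd (b p) (\<lambda>A'. (of_nat N / of_nat n) * (\<Sum>q<dm. act_factor N i (b q) (\<lambda>w''. dd (b q) (\<lambda>A. F A w'') A') w')) A
       = (of_nat N / of_nat n) * (\<Sum>q<dm. act_factor N i (b q) (\<lambda>w''. dd (b p) (dd (b q) (\<lambda>A. F A w'')) A) w')"
    proof -
      fix w'
      have P: "\<And>q. poly_fun N (\<lambda>A'. act_factor N i (b q) (\<lambda>w''. dd (b q) (\<lambda>A. F A w'') A') w')"
        by (rule act_poly) (rule ddfpoly)
      have "dd (b p) (\<lambda>A'. (of_nat N / of_nat n) * (\<Sum>q<dm. act_factor N i (b q) (\<lambda>w''. dd (b q) (\<lambda>A. F A w'') A') w')) A
         = (of_nat N / of_nat n) * dd (b p) (\<lambda>A'. \<Sum>q<dm. act_factor N i (b q) (\<lambda>w''. dd (b q) (\<lambda>A. F A w'') A') w') A"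
        by (rule dd_cmult[where N=N]) (intro poly_sum P, simp)
      also have "dd (b p) (\<lambda>A'. \<Sum>q<dm. act_factor N i (b q) (\<lambda>w''. dd (b q) (\<lambda>A. F A w'') A') w') A
         = (\<Sum>q<dm. dd (b p) (\<lambda>A'. act_factor N i (b q) (\<lambda>w''. dd (b q) (\<lambda>A. F A w'') A') w') A)"
        by (rule dd_sum[where N=N]) (simp_all add: P)
      also have "\<dots> = (\<Sum>q<dm. act_factor N i (b q) (\<lambda>w''. dd (b p) (dd (b q) (\<lambda>A. F A w'')) A) w')"
      proof (intro sum.cong refl)
        fix q
        show "dd (b p) (\<lambda>A'. act_factor N i (b q) (\<lambda>w''. dd (b q) (\<lambda>A. F A w'') A') w') A
            = act_factor N i (b q) (\<lambda>w''. dd (b p) (dd (b q) (\<lambda>A. F A w'')) A) w'"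
          using dd_act[where G="\<lambda>A w. dd (b q) (\<lambda>A. F A w) A" and N=N, OF ddfpoly] by simp
      qed
      finally show "dd (b p) (\<lambda>A'. (of_nat N / of_nat n) * (\<Sum>q<dm. act_factor N i (b q) (\<lambda>w''. dd (b q) (\<lambda>A. F A w'') A') w')) A
       = (of_nat N / of_nat n) * (\<Sum>q<dm. act_factor N i (b q) (\<lambda>w''. dd (b p) (dd (b q) (\<lambda>A. F A w'')) A) w')" .
    qed
    thus "dderiv (b p) (yop N n b i F) A = (\<lambda>w'. (of_nat N / of_nat n) *
      (\<Sum>q<dm. act_factor N i (b q) (\<lambda>w''. dd (b p) (dd (b q) (\<lambda>A. F A w'')) A) w'))"
      unfolding dderiv_fun yop_def dderiv_fun by simp
  qed
  show ?thesis unfolding yop_def[of N n b i "yop N n b i F"] d act_lin_T act_mm[OF il] ..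
qed

lemma mult_if_z: "(c * (if P then 1 else 0)) * x = (if P then c * x else (0::complex))" by simp

lemma pull2: "(\<Sum>i\<in>I. c * (\<Sum>p\<in>P. c * (\<Sum>q\<in>Q. g i p q))) = c * c * (\<Sum>i\<in>I. \<Sum>p\<in>P. \<Sum>q\<in>Q. (g i p q :: complex))"
  by (simp add: sum_distrib_left mult.assoc)

lemma dd_lincomb: "(\<And>r. r \<in> S \<Longrightarrow> poly_fun N (g r)) \<Longrightarrow> finite S \<Longrightarrow>
   dd v (\<lambda>B. \<Sum>r\<in>S. c r * g r B) = (\<lambda>B. \<Sum>r\<in>S. c r * dd v (g r) B)"
  by (simp add: fun_eq_iff dd_sum[where N=N] dd_cmult[where N=N] poly_cmult[where N=N])

lemma dd_exp_fun: "in_sl N u \<Longrightarrow> poly_fun N g \<Longrightarrow> dd u g = (\<lambda>B. \<Sum>r<dm. coord N (b r) u * dd (b r) g B)"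
  using dd_expand by (simp add: fun_eq_iff)

lemma P2form: "in_sl N L \<Longrightarrow> dd v (dd L (\<lambda>A. F A w)) A = (\<Sum>r<dm. coord N (b r) L * dd v (dd (b r) (\<lambda>A. F A w)) A)"
  by (simp add: dd_exp_fun fpoly dd_lincomb ddfpoly)

lemma P1form: "in_sl N L \<Longrightarrow> dd u (dd v (dd L (\<lambda>A. F A w))) A = (\<Sum>r<dm. coord N (b r) L * dd u (dd v (dd (b r) (\<lambda>A. F A w))) A)"
  by (simp add: dd_exp_fun fpoly dd_lincomb ddfpoly dd2fpoly)

lemma EK:
  assumes A: "in_sl N A" and w: "valid_idx N n w"
  shows "(\<Sum>p<dm. \<Sum>q<dm. \<Sum>i<n. act_factor N i (mat_mult N (b p) (b q)) (\<lambda>w'. dd (b p) (dd (b q) (\<lambda>A. F A w')) A) w)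
     = of_nat n / of_nat N * (\<Sum>p<dm. dd (b p) (dd (b p) (\<lambda>A. F A w)) A)"
proof -
  have Ab: "blk N A" using A sl_blk by blast
  define f where "f = (\<lambda>A. F A w)"
  define D2 where "D2 = (\<lambda>p q w'. dd (b p) (dd (b q) (\<lambda>A. F A w')) A)"
  define L where "L = (\<lambda>p q Y. lie_br N (mat_mult N (b p) (b q)) Y)"
  define P1 where "P1 = (\<lambda>p q. dd (b p) (dd (b q) (dd (L p q A) f)) A)"
  define P2 where "P2 = (\<lambda>p q. dd (b q) (dd (L p q (b p)) f) A)"
  define P3 where "P3 = (\<lambda>p q. dd (b p) (dd (L p q (b q)) f) A)"
  have Lsl: "\<And>p q Y. p < dm \<Longrightarrow> q < dm \<Longrightarrow> blk N Y \<Longrightarrow> in_sl N (L p q Y)"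
    unfolding L_def by (intro lie_sl mm_blk b_blk)
  have step: "\<And>p q. p < dm \<Longrightarrow> q < dm \<Longrightarrow>
     (\<Sum>i<n. act_factor N i (mat_mult N (b p) (b q)) (D2 p q) w)
       = P1 p q + P2 p q + P3 p q + (if p = q then of_nat n / of_nat N * D2 p q w else 0)"
  proof -
    fix p q assume p: "p < dm" and q: "q < dm"
    define \<delta> :: complex where "\<delta> = (if p = q then 1 else 0)"
    define X where "X = (\<lambda>a c. mat_mult N (b p) (b q) a c - (\<delta> / of_nat N) * idm N a c)"
    have Xsl: "in_sl N X"
    proof -
      have "mtrace N X = mtrace N (mat_mult N (b p) (b q)) - (\<delta> / of_nat N) * of_nat N"
        unfolding X_def using tr_lin[of N 1 "mat_mult N (b p) (b q)" "-(\<delta> / of_nat N)" "idm N"]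
        by (simp add: mtrace_idm)
      also have "mtrace N (mat_mult N (b p) (b q)) = \<delta>" using b_orth[OF p q] by (simp add: coord_def \<delta>_def)
      finally have "mtrace N X = 0" using Nne by simp
      moreover have "blk N X" unfolding X_def using mm_blk[OF b_blk[OF p] b_blk[OF q]] idm_blk
        by (auto simp: blk_def)
      ultimately show ?thesis by (simp add: in_sl_def blk_def)
    qed
    have "P1 p q + P2 p q + P3 p q = (\<Sum>i<n. act_factor N i X (D2 p q) w)"
      using DDINV[OF Xsl A b_sl[OF p] b_sl[OF q] w]
      unfolding P1_def P2_def P3_def L_def D2_def f_def X_def lie_idm[OF Ab] lie_idm[OF b_blk[OF p]] lie_idm[OF b_blk[OF q]]
      by simp
    also have "\<dots> = (\<Sum>i<n. act_factor N i (mat_mult N (b p) (b q)) (D2 p q) w - (\<delta> / of_nat N) * D2 p q w)"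
      unfolding X_def act_lin_X2 using w by (intro sum.cong refl) (simp add: act_idm valid_len valid_nth)
    finally show "(\<Sum>i<n. act_factor N i (mat_mult N (b p) (b q)) (D2 p q) w)
       = P1 p q + P2 p q + P3 p q + (if p = q then of_nat n / of_nat N * D2 p q w else 0)"
      by (simp add: sum_subtractf \<delta>_def)
  qed
  have S1: "(\<Sum>p<dm. \<Sum>q<dm. P1 p q) = 0"
  proof -
    define \<tau> where "\<tau> = (\<lambda>x y z. mtrace N (mat_mult N A (mat_mult N (b x) (mat_mult N (b y) (b z)))))"
    define D3 where "D3 = (\<lambda>p q r. dd (b p) (dd (b q) (dd (b r) f)) A)"
    have "\<And>p q. p < dm \<Longrightarrow> q < dm \<Longrightarrow> P1 p q = (\<Sum>r<dm. (\<tau> r p q - \<tau> p q r) * D3 p q r)"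
    proof -
      fix p q assume p: "p < dm" and q: "q < dm"
      have co: "\<And>r. coord N (b r) (L p q A) = \<tau> r p q - \<tau> p q r"
      proof -
        fix r
        have "coord N (b r) (L p q A) = coord N (b r) (mat_mult N (mat_mult N (b p) (b q)) A) - coord N (b r) (mat_mult N A (mat_mult N (b p) (b q)))"
          unfolding L_def lie_br_def by (rule coord_diff)
        also have "coord N (b r) (mat_mult N (mat_mult N (b p) (b q)) A) = \<tau> r p q"
        proof -
          have "mat_mult N (b r) (mat_mult N (mat_mult N (b p) (b q)) A) = mat_mult N (mat_mult N (b r) (mat_mult N (b p) (b q))) A"
            by (simp add: mm_assoc)
          thus ?thesis by (simp add: coord_def \<tau>_def tr_comm[of N _ A])
        qed
        also have "coord N (b r) (mat_mult N A (mat_mult N (b p) (b q))) = \<tau> p q r"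
        proof -
          have "coord N (b r) (mat_mult N A (mat_mult N (b p) (b q))) = mtrace N (mat_mult N (mat_mult N A (mat_mult N (b p) (b q))) (b r))"
            by (simp add: coord_def tr_comm)
          thus ?thesis by (simp add: \<tau>_def mm_assoc)
        qed
        finally show "coord N (b r) (L p q A) = \<tau> r p q - \<tau> p q r" .
      qed
      show "P1 p q = (\<Sum>r<dm. (\<tau> r p q - \<tau> p q r) * D3 p q r)"
        unfolding P1_def P1form[OF Lsl[OF p q Ab]] co D3_def f_def ..
    qed
    hence "(\<Sum>p<dm. \<Sum>q<dm. P1 p q) = (\<Sum>p<dm. \<Sum>q<dm. \<Sum>r<dm. (\<tau> r p q - \<tau> p q r) * D3 p q r)" by simp
    also have "\<dots> = 0"
    proof (rule cyc_sum)
      fix p q r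
      have "dd (b r) (dd (b p) f) = dd (b p) (dd (b r) f)" using dd_comm[OF fpoly] by (simp add: fun_eq_iff f_def)
      hence "D3 q r p = dd (b q) (dd (b p) (dd (b r) f)) A" by (simp add: D3_def)
      also have "\<dots> = D3 p q r" unfolding D3_def f_def by (rule dd_comm[OF ddfpoly])
      finally show "D3 q r p = D3 p q r" .
    qed
    finally show ?thesis .
  qed
  define D' where "D' = (\<lambda>p r. dd (b p) (dd (b r) f) A)"
  have S2: "(\<Sum>p<dm. \<Sum>q<dm. P2 p q) = - of_nat N * (\<Sum>q<dm. D' q q)"
  proof -
    have "(\<Sum>p<dm. \<Sum>q<dm. P2 p q) = (\<Sum>p<dm. \<Sum>q<dm. \<Sum>r<dm. coord N (b r) (L p q (b p)) * D' q r)"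
      by (intro sum.cong refl) (simp add: P2_def P2form[OF Lsl[OF _ _ b_blk]] D'_def f_def)
    also have "\<dots> = (\<Sum>q<dm. \<Sum>r<dm. \<Sum>p<dm. coord N (b r) (L p q (b p)) * D' q r)" by (rule swap3)
    also have "\<dots> = (\<Sum>q<dm. \<Sum>r<dm. (- of_nat N * (if r = q then 1 else 0)) * D' q r)"
      by (intro sum.cong refl) (simp add: sum_distrib_right[symmetric] L_def CT2)
    also have "\<dots> = (\<Sum>q<dm. - of_nat N * D' q q)"
      by (intro sum.cong refl) (simp only: mult_if_z sdelta, simp)
    finally show ?thesis by (simp add: sum_distrib_left)
  qed
  have S3: "(\<Sum>p<dm. \<Sum>q<dm. P3 p q) = of_nat N * (\<Sum>p<dm. D' p p)"
  proof -
    have "(\<Sum>p<dm. \<Sum>q<dm. P3 p q) = (\<Sum>p<dm. \<Sum>q<dm. \<Sum>r<dm. coord N (b r) (L p q (b q)) * D' p r)"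
      by (intro sum.cong refl) (simp add: P3_def P2form[OF Lsl[OF _ _ b_blk]] D'_def f_def)
    also have "\<dots> = (\<Sum>p<dm. \<Sum>r<dm. \<Sum>q<dm. coord N (b r) (L p q (b q)) * D' p r)"
      by (intro sum.cong refl sum.swap)
    also have "\<dots> = (\<Sum>p<dm. \<Sum>r<dm. (of_nat N * (if r = p then 1 else 0)) * D' p r)"
      by (intro sum.cong refl) (simp add: sum_distrib_right[symmetric] L_def CT3)
    also have "\<dots> = (\<Sum>p<dm. of_nat N * D' p p)"
      by (intro sum.cong refl) (simp only: mult_if_z sdelta, simp)
    finally show ?thesis by (simp add: sum_distrib_left)
  qed
  have "(\<Sum>p<dm. \<Sum>q<dm. \<Sum>i<n. act_factor N i (mat_mult N (b p) (b q)) (D2 p q) w)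
     = (\<Sum>p<dm. \<Sum>q<dm. P1 p q) + (\<Sum>p<dm. \<Sum>q<dm. P2 p q) + (\<Sum>p<dm. \<Sum>q<dm. P3 p q)
       + (\<Sum>p<dm. \<Sum>q<dm. (if p = q then of_nat n / of_nat N * D2 p q w else 0))"
    using step by (simp add: sum.distrib)
  also have "(\<Sum>p<dm. \<Sum>q<dm. (if p = q then of_nat n / of_nat N * D2 p q w else 0)) = (\<Sum>p<dm. of_nat n / of_nat N * D2 p p w)"
    by (intro sum.cong refl) (simp add: sdelta')
  finally show ?thesis unfolding S1 S2 S3 by (simp add: D2_def D'_def f_def sum_distrib_left sum_negf)
qed

lemma Epart:
  assumes A: "in_sl N A" and w: "valid_idx N n w"
  shows "ebold N n b F A w = (of_nat N / of_nat n) * Eop N b F A w"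
proof -
  have "ebold N n b F A w = 1/2 * (\<Sum>i<n. (of_nat N / of_nat n) * (\<Sum>p<dm. (of_nat N / of_nat n) * (\<Sum>q<dm. act_factor N i (mat_mult N (b p) (b q))
        (\<lambda>w'. dd (b p) (dd (b q) (\<lambda>A. F A w')) A) w)))"
    unfolding ebold_def using yy[OF w] by simp
  also have "\<dots> = 1/2 * ((of_nat N / of_nat n) * (of_nat N / of_nat n) * (\<Sum>p<dm. \<Sum>q<dm. \<Sum>i<n. act_factor N i (mat_mult N (b p) (b q))
        (\<lambda>w'. dd (b p) (dd (b q) (\<lambda>A. F A w')) A) w))"
  proof -
    have "(\<Sum>i<n. \<Sum>p<dm. \<Sum>q<dm. act_factor N i (mat_mult N (b p) (b q)) (\<lambda>w'. dd (b p) (dd (b q) (\<lambda>A. F A w')) A) w)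
      = (\<Sum>p<dm. \<Sum>q<dm. \<Sum>i<n. act_factor N i (mat_mult N (b p) (b q)) (\<lambda>w'. dd (b p) (dd (b q) (\<lambda>A. F A w')) A) w)"
      by (rule swap3)
    thus ?thesis unfolding pull2 by simp
  qed
  also have "\<dots> = (of_nat N / of_nat n) * Eop N b F A w"
    unfolding EK[OF A w] Eop_def using Nne npos by (simp add: dderiv_dd field_simps)
  finally show ?thesis .
qed

end

theorem mainTheorem14:
  fixes N n :: nat and b :: "nat \<Rightarrow> mat" and F :: "mat \<Rightarrow> tens"
  assumes "N dvd n" and "0 < n" and "onb N b" and "F \<in> V N n"
  shows "\<forall>A w. in_sl N A \<longrightarrow> valid_idx N n w \<longrightarrow>
           hbold N n b F A w = Hop N b F A w
         \<and> ebold N n b F A w = (of_nat N / of_nat n) * Eop N b F A w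
         \<and> fbold N n F A w = (of_nat n / of_nat N) * Fop N b F A w"
proof -
  have N: "0 < N" using assms(1,2) by (cases N) auto
  interpret vset N b n F by unfold_locales (use assms N in auto)
  show ?thesis using Hpart Epart Fpart by blast
qed

end
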